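(* Let $n,k\in\mathbb{N}$ and let $\mathcal{C}$ be a class of finite graphs such that $\mathrm{wd}^\otimes_n(G)\le k$ for all $G\in\mathcal{C}$. The following are equivalent: (1) $\mathcal{C}$ is $\mathrm{MSO}_1$-orderable; (2) $\mathcal{C}$ has property $\mathsf{CUT}$; (3) there is $d\in\mathbb{N}$ such that every $G\in\mathcal{C}$ has a $\otimes$-decomposition $(H_v)_{v\in T}$ of height at most $n$ and width at most $k$ in which every vertex of $T$ has outdegree at most $d$; (4) $\mathcal{C}$ is finite (up to isomorphism).
   Context: A graph with ports in $[k]=\{0,\dots,k-1\}$ is a graph with $\pi:V\to[k]$; for $R\subseteq[k]\times[k]$, $G\otimes_R H$ is the disjoint union plus all edges $\{x,y\}$ with $x,y$ in different operands, $x$ of label $a$, $y$ of label $b$, $(a,b)\in R$ (associative, commutative); $\mathrm{Del}$ deletes labels. A $\otimes$-decomposition of $G=\langle V,E\rangle$ of width $k$ is a family $(H_v)_{v\in T}$ of graphs with ports in $[k]$ indexed by a rooted tree $T$ such that: $H_{\mathrm{root}}$ is $G$ with some labelling; $H_v$ has exactly one vertex for each leaf $v$; and for every internal node $v$ with children $u_0,\dots,u_{d-1}$ there is $R_v\subseteq[k]\times[k]$ with $\mathrm{Del}(H_v)=\mathrm{Del}(H_{u_0}\otimes_{R_v}\cdots\otimes_{R_v}H_{u_{d-1}})$ (labels of $H_v$ and its children unrelated). Its height is the height of $T$. $\mathrm{wd}^\otimes_n(G)$ is the least $k$ such that $G$ has a $\otimes$-decomposition of width $\le k$ and height $\le n$.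 $\mathrm{Cut}(G,k)$ is the maximal $m$ with $G\cong\mathrm{Del}(H_0\otimes_R\cdots\otimes_R H_{m-1})$ for nonempty $H_i$ with ports in $[k]$ and some $R$; $\mathcal{C}$ has $\mathsf{CUT}$ if there is $f$ with $\mathrm{Cut}(G,k)\le f(k)$ for all $G\in\mathcal{C}$, $k$. $\mathcal{C}$ is $\mathrm{MSO}_1$-orderable if there is an MSO-formula $\varphi(x,y;Z_0,\dots,Z_{m-1})$ such that for every nonempty $G\in\mathcal{C}$ there are vertex sets $P_i$ with $\{(a,b):\lfloor G\rfloor\models\varphi(a,b;\bar P)\}$ a linear order on the vertices, where $\lfloor G\rfloor$ is the structure with universe $V$ and edge relation. *)

theory Defs
  imports Main "HOL-Library.Extended_Nat"
begin

text \<open>A (finite, simple, undirected) graph on natural-number vertices: a vertex set and a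
set of edges, each edge a two-element subset of the vertex set.\<close>

type_synonym graph = "nat set \<times> nat set set"

definition finite_graph :: "graph \<Rightarrow> bool" where
  "finite_graph G \<longleftrightarrow> finite (fst G) \<and>
     snd G \<subseteq> {{x, y} | x y. x \<in> fst G \<and> y \<in> fst G \<and> x \<noteq> y}"

definition graph_iso :: "graph \<Rightarrow> graph \<Rightarrow> bool" where
  "graph_iso G G' \<longleftrightarrow> (\<exists>f. bij_betw f (fst G) (fst G') \<and>
     (\<forall>x\<in>fst G. \<forall>y\<in>fst G. {x, y} \<in> snd G \<longleftrightarrow> {f x, f y} \<in> snd G'))"

record pgraph =
  pV :: "nat set"
  pE :: "nat set set"
  pl :: "nat \<Rightarrow> nat"

definition Del :: "pgraph \<Rightarrow> graph" where
  "Del H = (pV H, pE H)"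

definition ports_in :: "nat \<Rightarrow> pgraph \<Rightarrow> bool" where
  "ports_in k H \<longleftrightarrow> finite_graph (Del H) \<and> (\<forall>v\<in>pV H. pl H v < k)"

definition disjoint_ops :: "pgraph list \<Rightarrow> bool" where
  "disjoint_ops Hs \<longleftrightarrow> (\<forall>i<length Hs. \<forall>j<length Hs. i \<noteq> j \<longrightarrow> pV (Hs!i) \<inter> pV (Hs!j) = {})"

text \<open>\<open>tensor_Del R Hs\<close> is \<open>Del(H_0 \<otimes>_R \<dots> \<otimes>_R H_{d-1})\<close>.\<close>

definition tensor_Del :: "(nat \<times> nat) set \<Rightarrow> pgraph list \<Rightarrow> graph" where
  "tensor_Del R Hs =
     ((\<Union>H\<in>set Hs. pV H),
      (\<Union>H\<in>set Hs. pE H) \<union>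
      {{x, y} | x y i j. i < length Hs \<and> j < length Hs \<and> i \<noteq> j \<and>
         x \<in> pV (Hs!i) \<and> y \<in> pV (Hs!j) \<and> (pl (Hs!i) x, pl (Hs!j) y) \<in> R})"

datatype 'a dtree = DNode 'a "'a dtree list"

fun dlabel :: "'a dtree \<Rightarrow> 'a" where
  "dlabel (DNode x ts) = x"

fun dchildren :: "'a dtree \<Rightarrow> 'a dtree list" where
  "dchildren (DNode x ts) = ts"

fun dheight :: "'a dtree \<Rightarrow> nat" where
  "dheight (DNode x ts) = (if ts = [] then 0 else Suc (Max (set (map dheight ts))))"

inductive outdeg_le :: "nat \<Rightarrow> 'a dtree \<Rightarrow> bool" for d where
  "length ts \<le> d \<Longrightarrow> (\<forall>t\<in>set ts. outdeg_le d t) \<Longrightarrow> outdeg_le d (DNode x ts)"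

text \<open>Each tree node carries the graph with ports \<open>H_v\<close> and the relation \<open>R_v\<close>
(the latter is irrelevant at leaves). \<open>valid_dec k t\<close>: \<open>t\<close> is a \<otimes>-decomposition
(of the graph \<open>Del\<close> of its root) of width at most \<open>k\<close>.\<close>

inductive valid_dec :: "nat \<Rightarrow> (pgraph \<times> (nat \<times> nat) set) dtree \<Rightarrow> bool" for k where
  leaf: "ports_in k H \<Longrightarrow> card (pV H) = 1 \<Longrightarrow> valid_dec k (DNode (H, R) [])"
| node: "ports_in k H \<Longrightarrow> ts \<noteq> [] \<Longrightarrow> (\<forall>t\<in>set ts. valid_dec k t) \<Longrightarrow>
         disjoint_ops (map (fst \<circ> dlabel) ts) \<Longrightarrow>
         Del H = tensor_Del R (map (fst \<circ> dlabel) ts) \<Longrightarrow>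
         valid_dec k (DNode (H, R) ts)"

definition is_dec_of :: "graph \<Rightarrow> nat \<Rightarrow> (pgraph \<times> (nat \<times> nat) set) dtree \<Rightarrow> bool" where
  "is_dec_of G k t \<longleftrightarrow> valid_dec k t \<and> Del (fst (dlabel t)) = G"

definition wd_tensor :: "nat \<Rightarrow> graph \<Rightarrow> enat" where
  "wd_tensor n G = (if \<exists>k t. is_dec_of G k t \<and> dheight t \<le> n
     then enat (LEAST k. \<exists>t. is_dec_of G k t \<and> dheight t \<le> n) else \<infinity>)"

definition cut_rep :: "graph \<Rightarrow> nat \<Rightarrow> nat \<Rightarrow> bool" where
  "cut_rep G k m \<longleftrightarrow> (\<exists>Hs R. length Hs = m \<and> (\<forall>H\<in>set Hs. pV H \<noteq> {} \<and> ports_in k H) \<and>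
      disjoint_ops Hs \<and> graph_iso G (tensor_Del R Hs))"

definition Cut :: "graph \<Rightarrow> nat \<Rightarrow> nat" where
  "Cut G k = (GREATEST m. cut_rep G k m)"

definition has_CUT :: "graph set \<Rightarrow> bool" where
  "has_CUT C \<longleftrightarrow> (\<exists>f. \<forall>G\<in>C. \<forall>k. Cut G k \<le> f k)"

datatype mso =
    MEq nat nat
  | MEdge nat nat
  | MMem nat nat
  | MNeg mso
  | MConj mso mso
  | MEx1 nat mso
  | MEx2 nat mso

fun fv1 :: "mso \<Rightarrow> nat set" where
  "fv1 (MEq i j) = {i, j}"
| "fv1 (MEdge i j) = {i, j}"
| "fv1 (MMem i X) = {i}"
| "fv1 (MNeg \<phi>) = fv1 \<phi>"
| "fv1 (MConj \<phi> \<psi>) = fv1 \<phi> \<union> fv1 \<psi>"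
| "fv1 (MEx1 i \<phi>) = fv1 \<phi> - {i}"
| "fv1 (MEx2 X \<phi>) = fv1 \<phi>"

fun fv2 :: "mso \<Rightarrow> nat set" where
  "fv2 (MEq i j) = {}"
| "fv2 (MEdge i j) = {}"
| "fv2 (MMem i X) = {X}"
| "fv2 (MNeg \<phi>) = fv2 \<phi>"
| "fv2 (MConj \<phi> \<psi>) = fv2 \<phi> \<union> fv2 \<psi>"
| "fv2 (MEx1 i \<phi>) = fv2 \<phi>"
| "fv2 (MEx2 X \<phi>) = fv2 \<phi> - {X}"

fun sat :: "graph \<Rightarrow> (nat \<Rightarrow> nat) \<Rightarrow> (nat \<Rightarrow> nat set) \<Rightarrow> mso \<Rightarrow> bool" where
  "sat G \<alpha> \<beta> (MEq i j) = (\<alpha> i = \<alpha> j)"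
| "sat G \<alpha> \<beta> (MEdge i j) = ({\<alpha> i, \<alpha> j} \<in> snd G)"
| "sat G \<alpha> \<beta> (MMem i X) = (\<alpha> i \<in> \<beta> X)"
| "sat G \<alpha> \<beta> (MNeg \<phi>) = (\<not> sat G \<alpha> \<beta> \<phi>)"
| "sat G \<alpha> \<beta> (MConj \<phi> \<psi>) = (sat G \<alpha> \<beta> \<phi> \<and> sat G \<alpha> \<beta> \<psi>)"
| "sat G \<alpha> \<beta> (MEx1 i \<phi>) = (\<exists>a\<in>fst G. sat G (\<alpha>(i := a)) \<beta> \<phi>)"
| "sat G \<alpha> \<beta> (MEx2 X \<phi>) = (\<exists>S. S \<subseteq> fst G \<and> sat G \<alpha> (\<beta>(X := S)) \<phi>)"

text \<open>\<open>\<phi>(x,y;Z_0,\<dots>,Z_{m-1})\<close>: \<open>x\<close> is first-order variable 0, \<open>y\<close> is variable 1,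
\<open>Z_i\<close> is set variable \<open>i\<close>.\<close>
definition MSO_orderable :: "graph set \<Rightarrow> bool" where
  "MSO_orderable C \<longleftrightarrow> (\<exists>\<phi> m. fv1 \<phi> \<subseteq> {0, 1} \<and> fv2 \<phi> \<subseteq> {..<m} \<and>
     (\<forall>G\<in>C. fst G \<noteq> {} \<longrightarrow>
        (\<exists>P :: nat \<Rightarrow> nat set. (\<forall>i<m. P i \<subseteq> fst G) \<and>
           linear_order_on (fst G)
             {(a, b). a \<in> fst G \<and> b \<in> fst G \<and>
                sat G (\<lambda>i. if i = 0 then a else b) P \<phi>})))"

definition finite_up_to_iso :: "graph set \<Rightarrow> bool" where
  "finite_up_to_iso C \<longleftrightarrow> (\<exists>F. finite F \<and> (\<forall>G\<in>C. \<exists>G'\<in>F. graph_iso G G'))"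

end

theory Submission
  imports Defs
begin

fun subtrees :: "'a dtree \<Rightarrow> 'a dtree set" where
  "subtrees (DNode x ts) = insert (DNode x ts) (\<Union>t\<in>set ts. subtrees t)"

abbreviation rootg :: "(pgraph \<times> (nat \<times> nat) set) dtree \<Rightarrow> pgraph" where
  "rootg t \<equiv> fst (dlabel t)"

lemma valid_dec_mono: "valid_dec k t \<Longrightarrow> k \<le> k' \<Longrightarrow> valid_dec k' t"
proof (induction rule: valid_dec.induct)
  case (leaf H R) then show ?case by (force intro!: valid_dec.leaf simp: ports_in_def)
next
  case (node H ts R) then show ?case by (force intro!: valid_dec.node simp: ports_in_def)
qed

lemma Del_tensor_V: "Del H = tensor_Del R Hs \<Longrightarrow> pV H = (\<Union>G\<in>set Hs. pV G)"
  by (simp add: Del_def tensor_Del_def)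

lemma Del_tensor_V': "Del H = tensor_Del R (map (fst \<circ> dlabel) ts) \<Longrightarrow> pV H = (\<Union>t\<in>set ts. pV (rootg t))"
  unfolding Del_def tensor_Del_def by auto

lemma Del_tensor_E: "Del H = tensor_Del R Hs \<Longrightarrow> pE H = snd (tensor_Del R Hs)"
  by (simp add: Del_def tensor_Del_def)

lemma finite_graph_edgeV: "finite_graph G \<Longrightarrow> {u,v} \<in> snd G \<Longrightarrow> u \<in> fst G \<and> v \<in> fst G"
  unfolding finite_graph_def by (auto simp: doubleton_eq_iff)

lemma disj_uniq: "disjoint_ops Hs \<Longrightarrow> a < length Hs \<Longrightarrow> b < length Hs \<Longrightarrow> z \<in> pV (Hs!a) \<Longrightarrow> z \<in> pV (Hs!b) \<Longrightarrow> a = b"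
  unfolding disjoint_ops_def by blast

lemma tensor_edge:
  assumes dj: "disjoint_ops Hs" and fg: "\<forall>H\<in>set Hs. finite_graph (Del H)"
  and i: "i < length Hs" and j: "j < length Hs" and x: "x \<in> pV (Hs!i)" and y: "y \<in> pV (Hs!j)"
  shows "{x,y} \<in> snd (tensor_Del R Hs) \<longleftrightarrow> (if i = j then {x,y} \<in> pE (Hs!i)
     else (pl (Hs!i) x, pl (Hs!j) y) \<in> R \<or> (pl (Hs!j) y, pl (Hs!i) x) \<in> R)"
proof -
  have ev: "u \<in> pV (Hs!l) \<and> v \<in> pV (Hs!l)" if "l < length Hs" "{u,v} \<in> pE (Hs!l)" for l u v
    using finite_graph_edgeV[of "Del (Hs!l)" u v] fg that by (auto simp: Del_def)
  have un: "a = b" if "a < length Hs" "b < length Hs" "z \<in> pV (Hs!a)" "z \<in> pV (Hs!b)" for a b z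
    using disj_uniq[OF dj that] .
  have S: "{x,y} \<in> snd (tensor_Del R Hs) \<longleftrightarrow> (\<exists>l<length Hs. {x,y} \<in> pE (Hs!l)) \<or>
     (\<exists>x' y' i' j'. {x,y} = {x',y'} \<and> i' < length Hs \<and> j' < length Hs \<and> i' \<noteq> j' \<and>
         x' \<in> pV (Hs!i') \<and> y' \<in> pV (Hs!j') \<and> (pl (Hs!i') x', pl (Hs!j') y') \<in> R)"
    unfolding tensor_Del_def by (auto simp: in_set_conv_nth) (metis nth_mem)
  show ?thesis
  proof (cases "i = j")
    case True
    have "\<not> (\<exists>x' y' i' j'. {x,y} = {x',y'} \<and> i' < length Hs \<and> j' < length Hs \<and> i' \<noteq> j' \<and>
         x' \<in> pV (Hs!i') \<and> y' \<in> pV (Hs!j') \<and> (pl (Hs!i') x', pl (Hs!j') y') \<in> R)"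
    proof
      assume "\<exists>x' y' i' j'. {x,y} = {x',y'} \<and> i' < length Hs \<and> j' < length Hs \<and> i' \<noteq> j' \<and>
         x' \<in> pV (Hs!i') \<and> y' \<in> pV (Hs!j') \<and> (pl (Hs!i') x', pl (Hs!j') y') \<in> R"
      then obtain x' y' i' j' where h: "{x,y} = {x',y'}" "i' < length Hs" "j' < length Hs" "i' \<noteq> j'"
         "x' \<in> pV (Hs!i')" "y' \<in> pV (Hs!j')" by blast
      from h(1) have "x = x' \<and> y = y' \<or> x = y' \<and> y = x'" by (auto simp: doubleton_eq_iff)
      then show False using h un[of i i' x] un[of i j' x] un[of i j' y] un[of i i' y] i x y True by auto
    qed
    moreover have "(\<exists>l<length Hs. {x,y} \<in> pE (Hs!l)) \<longleftrightarrow> {x,y} \<in> pE (Hs!i)"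
      using ev un i x by blast
    ultimately have "{x,y} \<in> snd (tensor_Del R Hs) \<longleftrightarrow> {x,y} \<in> pE (Hs!i)" using S by blast
    then show ?thesis using True by simp
  next
    case False
    have "\<not> (\<exists>l<length Hs. {x,y} \<in> pE (Hs!l))"
      using ev un i j x y False by metis
    moreover have "(\<exists>x' y' i' j'. {x,y} = {x',y'} \<and> i' < length Hs \<and> j' < length Hs \<and> i' \<noteq> j' \<and>
         x' \<in> pV (Hs!i') \<and> y' \<in> pV (Hs!j') \<and> (pl (Hs!i') x', pl (Hs!j') y') \<in> R)
       \<longleftrightarrow> (pl (Hs!i) x, pl (Hs!j) y) \<in> R \<or> (pl (Hs!j) y, pl (Hs!i) x) \<in> R"
    proof
      assume "\<exists>x' y' i' j'. {x,y} = {x',y'} \<and> i' < length Hs \<and> j' < length Hs \<and> i' \<noteq> j' \<and>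
         x' \<in> pV (Hs!i') \<and> y' \<in> pV (Hs!j') \<and> (pl (Hs!i') x', pl (Hs!j') y') \<in> R"
      then obtain x' y' i' j' where h: "{x,y} = {x',y'}" "i' < length Hs" "j' < length Hs" "i' \<noteq> j'"
         "x' \<in> pV (Hs!i')" "y' \<in> pV (Hs!j')" "(pl (Hs!i') x', pl (Hs!j') y') \<in> R" by blast
      from h(1) have "x = x' \<and> y = y' \<or> x = y' \<and> y = x'" by (auto simp: doubleton_eq_iff)
      then show "(pl (Hs!i) x, pl (Hs!j) y) \<in> R \<or> (pl (Hs!j) y, pl (Hs!i) x) \<in> R"
      proof
        assume "x = x' \<and> y = y'"
        then have "i' = i" "j' = j" using un h i j x y by metis+
        then show ?thesis using h \<open>x = x' \<and> y = y'\<close> by simp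
      next
        assume "x = y' \<and> y = x'"
        then have "i' = j" "j' = i" using un h i j x y by metis+
        then show ?thesis using h \<open>x = y' \<and> y = x'\<close> by simp
      qed
    next
      assume "(pl (Hs!i) x, pl (Hs!j) y) \<in> R \<or> (pl (Hs!j) y, pl (Hs!i) x) \<in> R"
      then show "\<exists>x' y' i' j'. {x,y} = {x',y'} \<and> i' < length Hs \<and> j' < length Hs \<and> i' \<noteq> j' \<and>
         x' \<in> pV (Hs!i') \<and> y' \<in> pV (Hs!j') \<and> (pl (Hs!i') x', pl (Hs!j') y') \<in> R"
      proof
        assume "(pl (Hs!i) x, pl (Hs!j) y) \<in> R" then show ?thesis using i j x y False by blast
      next
        assume "(pl (Hs!j) y, pl (Hs!i) x) \<in> R"
        moreover have "{x,y} = {y,x}" by (rule insert_commute)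
        ultimately show ?thesis using i j x y False by blast
      qed
    qed
    ultimately have "{x,y} \<in> snd (tensor_Del R Hs) \<longleftrightarrow> (pl (Hs!i) x, pl (Hs!j) y) \<in> R \<or> (pl (Hs!j) y, pl (Hs!i) x) \<in> R" using S by blast
    then show ?thesis using False by simp
  qed
qed

lemma valid_leaf_inv: "valid_dec k (DNode (H,R) []) \<Longrightarrow> ports_in k H \<and> card (pV H) = 1"
  by (cases rule: valid_dec.cases) auto

lemma valid_node_inv: "valid_dec k (DNode (H,R) ts) \<Longrightarrow> ts \<noteq> [] \<Longrightarrow> ports_in k H \<and> (\<forall>t\<in>set ts. valid_dec k t)
   \<and> disjoint_ops (map (fst \<circ> dlabel) ts) \<and> Del H = tensor_Del R (map (fst \<circ> dlabel) ts)"
  by (cases rule: valid_dec.cases) auto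

lemma valid_basic: "valid_dec k t \<Longrightarrow> ports_in k (rootg t) \<and> pV (rootg t) \<noteq> {} \<and> finite (pV (rootg t))"
proof (induction rule: valid_dec.induct)
  case (leaf H R)
  then show ?case by (auto simp: card_ge_0_finite)
next
  case (node H ts R)
  have V: "pV H = (\<Union>t\<in>set ts. pV (rootg t))" using Del_tensor_V'[OF node(4)] .
  from node(2) obtain c where "c \<in> set ts" by (cases ts) auto
  then have "pV H \<noteq> {}" using node(5) V by auto
  moreover have "finite (pV H)" using node(1) by (simp add: ports_in_def finite_graph_def Del_def)
  ultimately show ?case using node(1) by simp
qed

lemma valid_children_V:
  assumes "valid_dec k (DNode (H,R) ts)" "ts \<noteq> []" shows "pV H = (\<Union>t\<in>set ts. pV (rootg t))"
proof -
  have "Del H = tensor_Del R (map (fst \<circ> dlabel) ts)" using valid_node_inv[OF assms] by (elim conjE)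
  then show ?thesis by (rule Del_tensor_V')
qed

lemma valid_subtrees: "valid_dec k t \<Longrightarrow> v \<in> subtrees t \<Longrightarrow> valid_dec k v \<and> pV (rootg v) \<subseteq> pV (rootg t)"
proof (induction arbitrary: v rule: valid_dec.induct)
  case (leaf H R) then show ?case by (auto intro: valid_dec.leaf)
next
  case (node H ts R)
  have V: "pV H = (\<Union>t\<in>set ts. pV (rootg t))" using Del_tensor_V'[OF node(4)] .
  show ?case
  proof (cases "v = DNode (H,R) ts")
    case True then show ?thesis using valid_dec.node[OF node(1,2) _ node(3,4)] node(5) by auto
  next
    case False
    then obtain c where c: "c \<in> set ts" "v \<in> subtrees c" using node(6) by auto
    then show ?thesis using node(5) V by fastforce
  qed
qed

lemma set_nth_image: "set xs = (\<lambda>i. xs!i) ` {..<length xs}"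
  by (auto simp: in_set_conv_nth image_iff)

lemma UN_set_nth: "(\<Union>t\<in>set xs. f t) = (\<Union>i<length xs. f (xs!i))"
  unfolding set_nth_image by (simp add: image_image)

lemma len_le_card_union:
  assumes "finite (\<Union>i<m. A i)" "\<forall>i<m. A i \<noteq> {}" "\<forall>i<m. \<forall>j<m. i \<noteq> j \<longrightarrow> A i \<inter> A j = {}"
  shows "m \<le> card (\<Union>i<m. A i)"
proof -
  have fin: "\<forall>i\<in>{..<m}. finite (A i)" using assms(1) by (meson UN_I finite_subset lessThan_iff subsetI)
  have "card (\<Union>i<m. A i) = (\<Sum>i<m. card (A i))"
    by (rule card_UN_disjoint) (use fin assms(3) in auto)
  also have "\<dots> \<ge> (\<Sum>i<m. 1)" by (rule sum_mono) (use fin assms(2) in \<open>auto simp: Suc_le_eq card_gt_0_iff\<close>)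
  finally show ?thesis by simp
qed

lemma valid_len_le_card: "valid_dec k (DNode (H,R) ts) \<Longrightarrow> length ts \<le> card (pV H)"
proof (cases "ts = []")
  case False
  assume v: "valid_dec k (DNode (H,R) ts)"
  note I = valid_node_inv[OF v False]
  let ?A = "\<lambda>i. pV (rootg (ts!i))"
  have V: "pV H = (\<Union>i<length ts. ?A i)" using valid_children_V[OF v False] UN_set_nth[of "\<lambda>t. pV (rootg t)" ts] by simp
  have "length ts \<le> card (\<Union>i<length ts. ?A i)"
  proof (rule len_le_card_union)
    show "finite (\<Union>i<length ts. ?A i)" using valid_basic[OF v] V by simp
    show "\<forall>i<length ts. ?A i \<noteq> {}"
    proof (intro allI impI)
      fix i assume "i < length ts"
      then have "ts!i \<in> set ts" by simp
      then show "?A i \<noteq> {}" using I valid_basic by blast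
    qed
    show "\<forall>i<length ts. \<forall>j<length ts. i \<noteq> j \<longrightarrow> ?A i \<inter> ?A j = {}"
      using I by (auto simp: disjoint_ops_def)
  qed
  then show ?thesis using V by simp
qed simp

lemma outdeg_inv: "outdeg_le d (DNode x ts) \<Longrightarrow> length ts \<le> d \<and> (\<forall>t\<in>set ts. outdeg_le d t)"
  by (cases rule: outdeg_le.cases) auto

lemma size_bound: "valid_dec k t \<Longrightarrow> outdeg_le d t \<Longrightarrow> card (pV (rootg t)) \<le> (max d 1) ^ dheight t"
proof (induction rule: valid_dec.induct)
  case (leaf H R) then show ?case by simp
next
  case (node H ts R)
  define D where "D = max d 1"
  define M where "M = Max (set (map dheight ts))"
  have o: "length ts \<le> d" "\<forall>t\<in>set ts. outdeg_le d t" using outdeg_inv[OF node(6)] by auto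
  have h: "dheight (DNode (H,R) ts) = Suc M" using node(2) by (simp add: M_def)
  have V: "pV H = (\<Union>t\<in>set ts. pV (rootg t))" using Del_tensor_V'[OF node(4)] .
  have c: "card (pV (rootg t)) \<le> D ^ M" if "t \<in> set ts" for t
  proof -
    have "card (pV (rootg t)) \<le> D ^ dheight t" using node(5) o(2) that by (simp add: D_def)
    also have "\<dots> \<le> D ^ M" by (rule power_increasing) (use that in \<open>auto simp: M_def D_def\<close>)
    finally show ?thesis .
  qed
  have "card (pV H) \<le> (\<Sum>t\<in>set ts. card (pV (rootg t)))" unfolding V by (rule card_UN_le) simp
  also have "\<dots> \<le> card (set ts) * D ^ M" using sum_bounded_above[of "set ts" "\<lambda>t. card (pV (rootg t))" "D^M"] c by simp
  also have "\<dots> \<le> D * D ^ M"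
    using o(1) card_length[of ts] by (intro mult_right_mono) (auto simp: D_def)
  finally show ?case using h D_def by simp
qed

lemma bounded_finite_iso:
  assumes "\<forall>G\<in>C. finite_graph G \<and> card (fst G) \<le> N"
  shows "finite_up_to_iso C"
proof -
  define F where "F = (\<lambda>(s,E). ({0..<s}, E)) ` ({..N} \<times> Pow (Pow {0..<N}))"
  have fin: "finite F" unfolding F_def by simp
  have "\<exists>G'\<in>F. graph_iso G G'" if G: "G \<in> C" for G
  proof -
    obtain V E where GVE: "G = (V,E)" by fastforce
    have fg: "finite_graph (V,E)" and cV: "card V \<le> N" using assms G GVE by auto
    have finV: "finite V" using fg by (simp add: finite_graph_def)
    obtain g where g: "bij_betw g V {0..<card V}" using ex_bij_betw_finite_nat[OF finV] by blast
    have esub: "e \<subseteq> V" if eE: "e \<in> E" for e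
    proof -
      have "E \<subseteq> {{x, y} | x y. x \<in> V \<and> y \<in> V \<and> x \<noteq> y}" using fg by (simp add: finite_graph_def)
      then obtain a b where "e = {a,b}" "a \<in> V" "b \<in> V" using eE by blast
      then show ?thesis by simp
    qed
    define E' where "E' = (\<lambda>e. g ` e) ` E"
    have "E' \<subseteq> Pow {0..<N}"
    proof
      fix e' assume "e' \<in> E'"
      then obtain e where "e \<in> E" "e' = g ` e" by (auto simp: E'_def)
      then have "e' \<subseteq> {0..<card V}" using esub g unfolding bij_betw_def by blast
      then show "e' \<in> Pow {0..<N}" using cV by auto
    qed
    then have "(card V, E') \<in> {..N} \<times> Pow (Pow {0..<N})" using cV by simp
    then have inF: "({0..<card V}, E') \<in> F" unfolding F_def by (rule rev_image_eqI) simp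
    have "graph_iso (V,E) ({0..<card V}, E')"
      unfolding graph_iso_def
    proof (intro exI[of _ g] conjI ballI)
      show "bij_betw g (fst (V, E)) (fst ({0..<card V}, E'))" using g by simp
      fix x y assume xy: "x \<in> fst (V,E)" "y \<in> fst (V,E)"
      have inj: "inj_on g V" using g by (simp add: bij_betw_def)
      show "({x, y} \<in> snd (V, E)) = ({g x, g y} \<in> snd ({0..<card V}, E'))"
      proof
        show "{x, y} \<in> snd (V, E) \<Longrightarrow> {g x, g y} \<in> snd ({0..<card V}, E')"
        proof -
          assume a: "{x, y} \<in> snd (V, E)"
          have "g ` {x,y} = {g x, g y}" by simp
          then show ?thesis using a unfolding E'_def by (metis imageI snd_conv)
        qed
      next
        assume "{g x, g y} \<in> snd ({0..<card V}, E')"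
        then obtain e where e: "e \<in> E" "g ` e = {g x, g y}" unfolding E'_def by auto
        have "g ` e = g ` {x,y}" using e by simp
        have xyV: "{x,y} \<subseteq> V" using xy by simp
        have eq: "(g ` e = g ` {x,y}) = (e = {x,y})" by (rule inj_on_image_eq_iff[OF inj esub[OF e(1)] xyV])
        have "e = {x,y}" using eq \<open>g ` e = g ` {x,y}\<close> by blast
        then show "{x, y} \<in> snd (V, E)" using e by simp
      qed
    qed
    then show ?thesis using inF GVE by blast
  qed
  then show ?thesis using fin unfolding finite_up_to_iso_def by blast
qed

lemma finite_iso_bounded:
  assumes "\<forall>G\<in>C. finite_graph G" "finite_up_to_iso C"
  shows "\<exists>N. \<forall>G\<in>C. card (fst G) \<le> N"
proof -
  have "\<exists>F. finite F \<and> (\<forall>G\<in>C. \<exists>G'\<in>F. graph_iso G G')" using assms(2) by (simp add: finite_up_to_iso_def)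
  then obtain F where F: "finite F" "\<forall>G\<in>C. \<exists>G'\<in>F. graph_iso G G'" by auto
  define N where "N = Max (insert 0 ((card \<circ> fst) ` F))"
  have "card (fst G) \<le> N" if GC: "G \<in> C" for G
  proof -
    obtain G' where "G' \<in> F" "graph_iso G G'" using F GC by auto
    then obtain f where "bij_betw f (fst G) (fst G')" unfolding graph_iso_def by auto
    then have "card (fst G) = card (fst G')" by (rule bij_betw_same_card)
    also have "\<dots> \<le> N" unfolding N_def using F(1) \<open>G' \<in> F\<close> by (intro Max_ge) auto
    finally show ?thesis .
  qed
  then show ?thesis by blast
qed

definition mor :: "mso \<Rightarrow> mso \<Rightarrow> mso" where "mor a b = MNeg (MConj (MNeg a) (MNeg b))"

fun mdisj :: "mso list \<Rightarrow> mso" where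
  "mdisj [] = MNeg (MEq 0 0)"
| "mdisj (a # as) = mor a (mdisj as)"

lemma sat_mdisj: "sat G \<alpha> \<beta> (mdisj xs) \<longleftrightarrow> (\<exists>a\<in>set xs. sat G \<alpha> \<beta> a)"
  by (induction xs) (auto simp: mor_def)

lemma fv_mdisj: "fv1 (mdisj xs) \<subseteq> insert 0 (\<Union>a\<in>set xs. fv1 a)" "fv2 (mdisj xs) = (\<Union>a\<in>set xs. fv2 a)"
  by (induction xs) (auto simp: mor_def)

definition ordlist :: "nat \<Rightarrow> mso list" where
  "ordlist N = concat (map (\<lambda>i. map (\<lambda>j. MConj (MMem 0 i) (MMem 1 j)) [Suc i..<N]) [0..<N])"

lemma set_ordlist: "set (ordlist N) = {MConj (MMem 0 i) (MMem 1 j) | i j. i < j \<and> j < N}"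
  unfolding ordlist_def by (auto simp: image_iff; force)

definition phiN :: "nat \<Rightarrow> mso" where "phiN N = mor (MEq 0 1) (mdisj (ordlist N))"

lemma sat_ord: "sat G \<alpha> \<beta> (mdisj (ordlist N)) \<longleftrightarrow> (\<exists>i j. i<j \<and> j<N \<and> \<alpha> 0 \<in> \<beta> i \<and> \<alpha> 1 \<in> \<beta> j)"
proof
  assume "sat G \<alpha> \<beta> (mdisj (ordlist N))"
  then obtain a where a: "a \<in> set (ordlist N)" "sat G \<alpha> \<beta> a" by (auto simp: sat_mdisj)
  then obtain i j where "i<j" "j<N" "a = MConj (MMem 0 i) (MMem 1 j)" by (auto simp: set_ordlist)
  then show "\<exists>i j. i<j \<and> j<N \<and> \<alpha> 0 \<in> \<beta> i \<and> \<alpha> 1 \<in> \<beta> j" using a(2) by auto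
next
  assume "\<exists>i j. i<j \<and> j<N \<and> \<alpha> 0 \<in> \<beta> i \<and> \<alpha> 1 \<in> \<beta> j"
  then obtain i j where ij: "i<j" "j<N" "\<alpha> 0 \<in> \<beta> i" "\<alpha> 1 \<in> \<beta> j" by blast
  then have "MConj (MMem 0 i) (MMem 1 j) \<in> set (ordlist N)" by (auto simp: set_ordlist)
  then show "sat G \<alpha> \<beta> (mdisj (ordlist N))" using ij
    by (auto simp: sat_mdisj intro!: bexI[where x="MConj (MMem 0 i) (MMem 1 j)"])
qed

lemma linord_inj: "inj_on g V \<Longrightarrow> linear_order_on V {(a,b). a \<in> V \<and> b \<in> V \<and> (g a :: nat) \<le> g b}"
  unfolding linear_order_on_def partial_order_on_def preorder_on_def refl_on_def trans_def antisym_def total_on_def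
  by (auto dest: inj_onD)

lemma bounded_MSO:
  assumes "\<forall>G\<in>C. card (fst G) \<le> N" "\<forall>G\<in>C. finite_graph G"
  shows "MSO_orderable C"
  unfolding MSO_orderable_def
proof (intro exI[of _ "phiN N"] exI[of _ N] conjI ballI impI)
  show "fv1 (phiN N) \<subseteq> {0, 1}" using fv_mdisj(1)[of "ordlist N"] by (auto simp: phiN_def mor_def set_ordlist)
  show "fv2 (phiN N) \<subseteq> {..<N}" using fv_mdisj(2)[of "ordlist N"] by (auto simp: phiN_def mor_def set_ordlist)
  fix G assume G: "G \<in> C" "fst G \<noteq> {}"
  define V where "V = fst G"
  have finV: "finite V" using assms(2) G by (simp add: finite_graph_def V_def)
  obtain h where h: "bij_betw h {0..<card V} V" using ex_bij_betw_nat_finite[OF finV] by blast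
  define g where "g = inv_into {0..<card V} h"
  have g: "bij_betw g V {0..<card V}" using h by (simp add: g_def bij_betw_inv_into)
  have hg: "h (g a) = a" if "a \<in> V" for a using h that by (simp add: g_def bij_betw_inv_into_right)
  have gh: "g (h i) = i" if "i < card V" for i using h that by (simp add: g_def bij_betw_inv_into_left)
  define P where "P = (\<lambda>i. if i < card V then {h i} else {})"
  have cN: "card V \<le> N" using assms(1) G by (simp add: V_def)
  have memP: "a \<in> P i \<longleftrightarrow> i = g a" if "a \<in> V" for a i
    using that hg gh g by (auto simp: P_def bij_betw_def) 
  have sat: "sat G (\<lambda>i. if i = 0 then a else b) P (phiN N) \<longleftrightarrow> g a \<le> g b" if ab: "a \<in> V" "b \<in> V" for a b
  proof -
    have "sat G (\<lambda>i. if i = 0 then a else b) P (phiN N) \<longleftrightarrow> a = b \<or> (\<exists>i j. i < j \<and> j < N \<and> a \<in> P i \<and> b \<in> P j)"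
      by (auto simp: phiN_def mor_def sat_ord)
    also have "\<dots> \<longleftrightarrow> g a = g b \<or> g a < g b"
    proof -
      have "g b \<in> {0..<card V}" using bij_betw_apply[OF g ab(2)] .
      then have gb: "g b < N" using cN by simp
      have e1: "(\<exists>i j. i < j \<and> j < N \<and> a \<in> P i \<and> b \<in> P j) \<longleftrightarrow> g a < g b"
        using memP ab gb by auto
      have e2: "a = b \<longleftrightarrow> g a = g b" using g ab by (auto simp: bij_betw_def dest: inj_onD)
      show ?thesis using e1 e2 by simp
    qed
    finally show ?thesis by auto
  qed
  show "\<exists>P. (\<forall>i<N. P i \<subseteq> fst G) \<and> linear_order_on (fst G)
      {(a, b). a \<in> fst G \<and> b \<in> fst G \<and> sat G (\<lambda>i. if i = 0 then a else b) P (phiN N)}"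
  proof (intro exI[of _ P] conjI allI impI)
    show "P i \<subseteq> fst G" for i using h by (auto simp: P_def V_def bij_betw_def)
    have "{(a, b). a \<in> fst G \<and> b \<in> fst G \<and> sat G (\<lambda>i. if i = 0 then a else b) P (phiN N)}
       = {(a,b). a \<in> V \<and> b \<in> V \<and> g a \<le> g b}" using sat by (auto simp: V_def)
    then show "linear_order_on (fst G) {(a, b). a \<in> fst G \<and> b \<in> fst G \<and> sat G (\<lambda>i. if i = 0 then a else b) P (phiN N)}"
      using linord_inj[of g V] g by (simp add: bij_betw_def V_def)
  qed
qed


lemma sat_fv2: "(\<forall>X\<in>fv2 \<phi>. \<beta> X = \<beta>' X) \<Longrightarrow> sat G \<alpha> \<beta> \<phi> = sat G \<alpha> \<beta>' \<phi>"
proof (induction \<phi> arbitrary: \<alpha> \<beta> \<beta>')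
  case (MEx2 X \<psi>)
  have "sat G \<alpha> (\<beta>(X:=S)) \<psi> = sat G \<alpha> (\<beta>'(X:=S)) \<psi>" for S
    by (rule MEx2.IH) (use MEx2.prems in auto)
  then show ?case by simp
next
  case (MConj a b)
  have "sat G \<alpha> \<beta> a = sat G \<alpha> \<beta>' a" by (rule MConj.IH(1)) (use MConj.prems in auto)
  moreover have "sat G \<alpha> \<beta> b = sat G \<alpha> \<beta>' b" by (rule MConj.IH(2)) (use MConj.prems in auto)
  ultimately show ?case by simp
qed auto

lemma sat_aut:
  assumes bij: "bij \<sigma>" and V: "\<sigma> ` fst G = fst G" and E: "\<forall>x y. {x,y} \<in> snd G \<longleftrightarrow> {\<sigma> x, \<sigma> y} \<in> snd G"
  shows "sat G \<alpha> \<beta> \<phi> = sat G (\<sigma> \<circ> \<alpha>) (\<lambda>X. \<sigma> ` \<beta> X) \<phi>"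
proof (induction \<phi> arbitrary: \<alpha> \<beta>)
  case (MEq i j)
  have "inj \<sigma>" using bij by (simp add: bij_is_inj)
  then show ?case by (simp add: inj_eq)
next
  case (MEdge i j)
  then show ?case using E by simp
next
  case (MMem i X)
  have "inj \<sigma>" using bij by (simp add: bij_is_inj)
  then show ?case by (simp add: inj_image_mem_iff)
next
  case (MNeg \<psi>)
  then show ?case by simp
next
  case (MConj \<psi>1 \<psi>2)
  then show ?case by simp
next
  case (MEx1 i \<psi>)
  have c: "\<sigma> \<circ> (\<alpha>(i:=a)) = (\<sigma> \<circ> \<alpha>)(i := \<sigma> a)" for a by auto
  have "sat G \<alpha> \<beta> (MEx1 i \<psi>) \<longleftrightarrow> (\<exists>a\<in>fst G. sat G ((\<sigma> \<circ> \<alpha>)(i := \<sigma> a)) (\<lambda>X. \<sigma> ` \<beta> X) \<psi>)"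
  proof -
    have "sat G (\<alpha>(i:=a)) \<beta> \<psi> = sat G ((\<sigma> \<circ> \<alpha>)(i := \<sigma> a)) (\<lambda>X. \<sigma> ` \<beta> X) \<psi>" for a
      unfolding c[symmetric, of a] by (rule MEx1.IH)
    then show ?thesis by simp
  qed
  also have "\<dots> \<longleftrightarrow> (\<exists>b\<in>fst G. sat G ((\<sigma> \<circ> \<alpha>)(i := b)) (\<lambda>X. \<sigma> ` \<beta> X) \<psi>)"
  proof
    assume "\<exists>a\<in>fst G. sat G ((\<sigma> \<circ> \<alpha>)(i := \<sigma> a)) (\<lambda>X. \<sigma> ` \<beta> X) \<psi>"
    then obtain a where "a \<in> fst G" "sat G ((\<sigma> \<circ> \<alpha>)(i := \<sigma> a)) (\<lambda>X. \<sigma> ` \<beta> X) \<psi>" by blast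
    moreover have "\<sigma> a \<in> fst G" using V \<open>a \<in> fst G\<close> by blast
    ultimately show "\<exists>b\<in>fst G. sat G ((\<sigma> \<circ> \<alpha>)(i := b)) (\<lambda>X. \<sigma> ` \<beta> X) \<psi>" by blast
  next
    assume "\<exists>b\<in>fst G. sat G ((\<sigma> \<circ> \<alpha>)(i := b)) (\<lambda>X. \<sigma> ` \<beta> X) \<psi>"
    then obtain b where b: "b \<in> fst G" "sat G ((\<sigma> \<circ> \<alpha>)(i := b)) (\<lambda>X. \<sigma> ` \<beta> X) \<psi>" by blast
    then obtain a where "a \<in> fst G" "b = \<sigma> a" using V by (metis imageE)
    then show "\<exists>a\<in>fst G. sat G ((\<sigma> \<circ> \<alpha>)(i := \<sigma> a)) (\<lambda>X. \<sigma> ` \<beta> X) \<psi>" using b by blast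
  qed
  also have "\<dots> \<longleftrightarrow> sat G (\<sigma> \<circ> \<alpha>) (\<lambda>X. \<sigma> ` \<beta> X) (MEx1 i \<psi>)" by simp
  finally show ?case .
next
  case (MEx2 X \<psi>)
  have eq: "(\<lambda>Y. \<sigma> ` (\<beta>(X:=S)) Y) = (\<lambda>Y. \<sigma> ` \<beta> Y)(X := \<sigma> ` S)" for S by (rule ext) simp
  have inj: "inj \<sigma>" using bij by (simp add: bij_is_inj)
  show ?case
  proof
    assume "sat G \<alpha> \<beta> (MEx2 X \<psi>)"
    then obtain S where S: "S \<subseteq> fst G" "sat G \<alpha> (\<beta>(X:=S)) \<psi>" by auto
    then have "sat G (\<sigma> \<circ> \<alpha>) ((\<lambda>Y. \<sigma> ` \<beta> Y)(X := \<sigma> ` S)) \<psi>"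
      using MEx2.IH[of \<alpha> "\<beta>(X:=S)"] eq[of S] by (simp add: comp_def)
    moreover have "\<sigma> ` S \<subseteq> fst G" using S(1) V by blast
    ultimately show "sat G (\<sigma> \<circ> \<alpha>) (\<lambda>Y. \<sigma> ` \<beta> Y) (MEx2 X \<psi>)" by auto
  next
    assume "sat G (\<sigma> \<circ> \<alpha>) (\<lambda>Y. \<sigma> ` \<beta> Y) (MEx2 X \<psi>)"
    then obtain S' where S': "S' \<subseteq> fst G" "sat G (\<sigma> \<circ> \<alpha>) ((\<lambda>Y. \<sigma> ` \<beta> Y)(X:=S')) \<psi>" by auto
    define S where "S = {x. \<sigma> x \<in> S'}"
    have img: "\<sigma> ` S = S'"
    proof
      show "\<sigma> ` S \<subseteq> S'" by (auto simp: S_def)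
      show "S' \<subseteq> \<sigma> ` S"
      proof
        fix y assume "y \<in> S'"
        have "\<sigma> (inv \<sigma> y) = y" using bij by (simp add: bij_is_surj surj_f_inv_f)
        then show "y \<in> \<sigma> ` S" using \<open>y \<in> S'\<close> unfolding S_def by (metis (mono_tags, lifting) imageI mem_Collect_eq)
      qed
    qed
    have sub: "S \<subseteq> fst G"
    proof
      fix x assume "x \<in> S"
      then have "\<sigma> x \<in> fst G" using S'(1) by (auto simp: S_def)
      then obtain v where "v \<in> fst G" "\<sigma> x = \<sigma> v" using V by (metis imageE)
      then show "x \<in> fst G" using inj by (metis injD)
    qed
    have "sat G \<alpha> (\<beta>(X:=S)) \<psi>"
    proof -
      have e: "sat G \<alpha> (\<beta>(X:=S)) \<psi> = sat G (\<sigma> \<circ> \<alpha>) (\<lambda>Y. \<sigma> ` (\<beta>(X:=S)) Y) \<psi>" by (rule MEx2.IH)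
      have "(\<lambda>Y. \<sigma> ` (\<beta>(X:=S)) Y) = (\<lambda>Y. \<sigma> ` \<beta> Y)(X := S')" using eq[of S] img by simp
      then show ?thesis using e S'(2) by simp
    qed
    then show "sat G \<alpha> \<beta> (MEx2 X \<psi>)" using sub by auto
  qed
qed

definition iso_lab :: "(nat \<Rightarrow> nat list) \<Rightarrow> pgraph \<Rightarrow> pgraph \<Rightarrow> (nat \<Rightarrow> nat) \<Rightarrow> bool" where
  "iso_lab L A B f \<longleftrightarrow> bij_betw f (pV A) (pV B) \<and> (\<forall>x\<in>pV A. pl B (f x) = pl A x \<and> L (f x) = L x)
     \<and> (\<forall>x\<in>pV A. \<forall>y\<in>pV A. {x,y} \<in> pE A \<longleftrightarrow> {f x, f y} \<in> pE B)"

inductive good :: "(nat \<Rightarrow> nat list) \<Rightarrow> (pgraph \<times> (nat \<times> nat) set) dtree \<Rightarrow> bool" where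
  swap: "i < length cs \<Longrightarrow> j < length cs \<Longrightarrow> i \<noteq> j \<Longrightarrow>
     iso_lab (\<lambda>x. pl H x # Lab x) (rootg (cs!i)) (rootg (cs!j)) f \<Longrightarrow> good Lab (DNode (H,R) cs)"
| down: "c \<in> set cs \<Longrightarrow> good (\<lambda>x. pl H x # Lab x) c \<Longrightarrow> good Lab (DNode (H,R) cs)"

lemma valid_child:
  assumes v: "valid_dec k (DNode (H,R) cs)" and p: "p < length cs"
  shows "valid_dec k (cs!p) \<and> pV (rootg (cs!p)) \<subseteq> pV H \<and> finite_graph (Del (rootg (cs!p)))
     \<and> pV (rootg (cs!p)) \<noteq> {} \<and> (\<forall>x\<in>pV (rootg (cs!p)). pl (rootg (cs!p)) x < k)"
proof -
  have ne: "cs \<noteq> []" using p by auto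
  note I = valid_node_inv[OF v ne]
  have "cs!p \<in> set cs" using p by simp
  then have vc: "valid_dec k (cs!p)" using I by blast
  moreover have "pV (rootg (cs!p)) \<subseteq> pV H" using valid_children_V[OF v ne] \<open>cs!p \<in> set cs\<close> by blast
  ultimately show ?thesis using valid_basic[OF vc] by (simp add: ports_in_def)
qed

lemma valid_disj:
  assumes v: "valid_dec k (DNode (H,R) cs)" and "p < length cs" "q < length cs" "p \<noteq> q"
  shows "pV (rootg (cs!p)) \<inter> pV (rootg (cs!q)) = {}"
proof -
  have ne: "cs \<noteq> []" using assms by auto
  note I = valid_node_inv[OF v ne]
  then show ?thesis using assms unfolding disjoint_ops_def by auto
qed

lemma valid_edges:
  assumes v: "valid_dec k (DNode (H,R) cs)" and p: "p < length cs" "q < length cs"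
    and x: "x \<in> pV (rootg (cs!p))" and y: "y \<in> pV (rootg (cs!q))"
  shows "{x,y} \<in> pE H \<longleftrightarrow> (if p = q then {x,y} \<in> pE (rootg (cs!p))
     else (pl (rootg (cs!p)) x, pl (rootg (cs!q)) y) \<in> R \<or> (pl (rootg (cs!q)) y, pl (rootg (cs!p)) x) \<in> R)"
proof -
  have ne: "cs \<noteq> []" using p by auto
  note I = valid_node_inv[OF v ne]
  let ?Hs = "map (fst \<circ> dlabel) cs"
  have fg: "\<forall>G\<in>set ?Hs. finite_graph (Del G)"
    using I valid_basic by (auto simp: ports_in_def)
  have "pE H = snd (tensor_Del R ?Hs)" using I Del_tensor_E by blast
  then show ?thesis using tensor_edge[of ?Hs p q x y R] I fg p x y by simp
qed

lemma valid_edge_outside: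
  assumes v: "valid_dec k t" and "x \<notin> pV (rootg t)"
  shows "{x,y} \<notin> pE (rootg t)"
proof
  assume "{x,y} \<in> pE (rootg t)"
  have "finite_graph (Del (rootg t))" using valid_basic[OF v] by (simp add: ports_in_def)
  then show False using finite_graph_edgeV[of "Del (rootg t)" x y] \<open>{x,y} \<in> pE (rootg t)\<close> assms(2)
    by (simp add: Del_def)
qed

lemma node_aut:
  assumes v: "valid_dec k (DNode (H,R) cs)" and ne: "cs \<noteq> []"
  and pi1: "\<forall>p<length cs. \<pi> p < length cs" and pi2: "inj_on \<pi> {..<length cs}"
  and mv: "\<forall>p<length cs. \<forall>x\<in>pV (rootg (cs!p)). \<sigma> x \<in> pV (rootg (cs!\<pi> p)) \<and> pl (rootg (cs!\<pi> p)) (\<sigma> x) = pl (rootg (cs!p)) x"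
  and me: "\<forall>p<length cs. \<forall>x\<in>pV (rootg (cs!p)). \<forall>y\<in>pV (rootg (cs!p)). {x,y} \<in> pE (rootg (cs!p)) \<longleftrightarrow> {\<sigma> x, \<sigma> y} \<in> pE (rootg (cs!\<pi> p))"
  shows "\<forall>x\<in>pV H. \<forall>y\<in>pV H. {x,y} \<in> pE H \<longleftrightarrow> {\<sigma> x, \<sigma> y} \<in> pE H"
proof (intro ballI)
  fix x y assume xy: "x \<in> pV H" "y \<in> pV H"
  have V: "pV H = (\<Union>i<length cs. pV (rootg (cs!i)))"
    using valid_children_V[OF v ne] UN_set_nth[of "\<lambda>t. pV (rootg t)" cs] by simp
  obtain p where p: "p < length cs" "x \<in> pV (rootg (cs!p))" using xy V by auto
  obtain q where q: "q < length cs" "y \<in> pV (rootg (cs!q))" using xy V by auto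
  have sx: "\<sigma> x \<in> pV (rootg (cs!\<pi> p))" and sy: "\<sigma> y \<in> pV (rootg (cs!\<pi> q))" using mv p q by auto
  have pp: "\<pi> p < length cs" "\<pi> q < length cs" using pi1 p q by auto
  have e1: "{x,y} \<in> pE H \<longleftrightarrow> (if p = q then {x,y} \<in> pE (rootg (cs!p))
     else (pl (rootg (cs!p)) x, pl (rootg (cs!q)) y) \<in> R \<or> (pl (rootg (cs!q)) y, pl (rootg (cs!p)) x) \<in> R)"
    by (rule valid_edges[OF v p(1) q(1) p(2) q(2)])
  have e2: "{\<sigma> x,\<sigma> y} \<in> pE H \<longleftrightarrow> (if \<pi> p = \<pi> q then {\<sigma> x,\<sigma> y} \<in> pE (rootg (cs!\<pi> p))
     else (pl (rootg (cs!\<pi> p)) (\<sigma> x), pl (rootg (cs!\<pi> q)) (\<sigma> y)) \<in> R \<or> (pl (rootg (cs!\<pi> q)) (\<sigma> y), pl (rootg (cs!\<pi> p)) (\<sigma> x)) \<in> R)"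
    by (rule valid_edges[OF v pp sx sy])
  have pq: "\<pi> p = \<pi> q \<longleftrightarrow> p = q" using pi2 p(1) q(1) by (auto dest: inj_onD)
  show "{x,y} \<in> pE H \<longleftrightarrow> {\<sigma> x, \<sigma> y} \<in> pE H"
  proof (cases "p = q")
    case True
    then show ?thesis using e1 e2 me p q by simp
  next
    case False
    then show ?thesis using e1 e2 pq mv p q by simp
  qed
qed


lemma good_aut:
  "good Lab t \<Longrightarrow> valid_dec k t \<Longrightarrow> \<exists>\<sigma>. (\<forall>x. \<sigma> (\<sigma> x) = x) \<and> (\<forall>x. x \<notin> pV (rootg t) \<longrightarrow> \<sigma> x = x)
    \<and> (\<exists>a\<in>pV (rootg t). \<sigma> a \<noteq> a)
    \<and> (\<forall>x\<in>pV (rootg t). \<sigma> x \<in> pV (rootg t) \<and> pl (rootg t) (\<sigma> x) = pl (rootg t) x \<and> Lab (\<sigma> x) = Lab x)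
    \<and> (\<forall>x\<in>pV (rootg t). \<forall>y\<in>pV (rootg t). {x,y} \<in> pE (rootg t) \<longleftrightarrow> {\<sigma> x, \<sigma> y} \<in> pE (rootg t))"
proof (induction rule: good.induct)
  case (swap i cs j H Lab f R)
  note v = swap.prems
  have ne: "cs \<noteq> []" using swap.hyps(1) by auto
  let ?A = "rootg (cs!i)" and ?B = "rootg (cs!j)"
  have iso: "bij_betw f (pV ?A) (pV ?B)"
    and lab: "\<forall>x\<in>pV ?A. pl ?B (f x) = pl ?A x \<and> pl H (f x) = pl H x \<and> Lab (f x) = Lab x"
    and ed: "\<forall>x\<in>pV ?A. \<forall>y\<in>pV ?A. {x,y} \<in> pE ?A \<longleftrightarrow> {f x, f y} \<in> pE ?B"
    using swap.hyps(4) unfolding iso_lab_def by auto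
  define g where "g = the_inv_into (pV ?A) f"
  have inj: "inj_on f (pV ?A)" using iso by (simp add: bij_betw_def)
  have gB: "g y \<in> pV ?A" if "y \<in> pV ?B" for y
    using bij_betw_the_inv_into[OF iso] that unfolding g_def by (simp add: bij_betw_apply)
  have fg: "f (g y) = y" if "y \<in> pV ?B" for y
    using f_the_inv_into_f_bij_betw[OF iso that] unfolding g_def .
  have gf: "g (f x) = x" if "x \<in> pV ?A" for x
    using the_inv_into_f_f[OF inj that] unfolding g_def .
  have fA: "f x \<in> pV ?B" if "x \<in> pV ?A" for x using iso that by (simp add: bij_betw_apply)
  have dAB: "pV ?A \<inter> pV ?B = {}" by (rule valid_disj[OF v swap.hyps(1,2,3)])
  have ci: "pV ?A \<subseteq> pV H" "pV ?A \<noteq> {}" using valid_child[OF v swap.hyps(1)] by auto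
  have cj: "pV ?B \<subseteq> pV H" using valid_child[OF v swap.hyps(2)] by auto
  define \<sigma> where "\<sigma> x = (if x \<in> pV ?A then f x else if x \<in> pV ?B then g x else x)" for x
  have sA: "\<sigma> x = f x" if "x \<in> pV ?A" for x using that by (simp add: \<sigma>_def)
  have sB: "\<sigma> x = g x" if "x \<in> pV ?B" for x using that dAB by (auto simp: \<sigma>_def)
  have sO: "\<sigma> x = x" if "x \<notin> pV ?A" "x \<notin> pV ?B" for x using that by (simp add: \<sigma>_def)
  have invo: "\<sigma> (\<sigma> x) = x" for x
  proof (cases "x \<in> pV ?A")
    case True
    then have "f x \<in> pV ?B" "f x \<notin> pV ?A" using fA dAB by auto
    then show ?thesis using True sA sB gf by simp
  next
    case False
    show ?thesis
    proof (cases "x \<in> pV ?B")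
      case True
      then show ?thesis using sB sA gB fg by simp
    next
      case False
      then show ?thesis using \<open>x \<notin> pV ?A\<close> sO by simp
    qed
  qed
  define \<pi> where "\<pi> p = (if p = i then j else if p = j then i else p)" for p
  have pi1: "\<forall>p<length cs. \<pi> p < length cs" using swap.hyps(1,2) by (simp add: \<pi>_def)
  have pi2: "inj_on \<pi> {..<length cs}" by (auto simp: \<pi>_def inj_on_def split: if_splits)
  have other: "x \<notin> pV ?A \<and> x \<notin> pV ?B" if "p < length cs" "p \<noteq> i" "p \<noteq> j" "x \<in> pV (rootg (cs!p))" for p x
    using valid_disj[OF v that(1) swap.hyps(1) that(2)] valid_disj[OF v that(1) swap.hyps(2) that(3)] that(4) by blast
  have mv: "\<forall>p<length cs. \<forall>x\<in>pV (rootg (cs!p)). \<sigma> x \<in> pV (rootg (cs!\<pi> p)) \<and> pl (rootg (cs!\<pi> p)) (\<sigma> x) = pl (rootg (cs!p)) x"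
  proof (intro allI impI ballI)
    fix p x assume p: "p < length cs" and x: "x \<in> pV (rootg (cs!p))"
    show "\<sigma> x \<in> pV (rootg (cs!\<pi> p)) \<and> pl (rootg (cs!\<pi> p)) (\<sigma> x) = pl (rootg (cs!p)) x"
    proof (cases "p = i")
      case True
      then show ?thesis using x sA fA lab by (simp add: \<pi>_def)
    next
      case ni: False
      show ?thesis
      proof (cases "p = j")
        case True
        have "pl ?B (f (g x)) = pl ?A (g x)" using lab gB x True by blast
        then show ?thesis using x sB gB fg ni True by (simp add: \<pi>_def)
      next
        case False
        then show ?thesis using other[OF p ni False x] sO x ni by (simp add: \<pi>_def)
      qed
    qed
  qed
  have me: "\<forall>p<length cs. \<forall>x\<in>pV (rootg (cs!p)). \<forall>y\<in>pV (rootg (cs!p)). {x,y} \<in> pE (rootg (cs!p)) \<longleftrightarrow> {\<sigma> x, \<sigma> y} \<in> pE (rootg (cs!\<pi> p))"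
  proof (intro allI impI ballI)
    fix p x y assume p: "p < length cs" and x: "x \<in> pV (rootg (cs!p))" and y: "y \<in> pV (rootg (cs!p))"
    show "{x,y} \<in> pE (rootg (cs!p)) \<longleftrightarrow> {\<sigma> x, \<sigma> y} \<in> pE (rootg (cs!\<pi> p))"
    proof (cases "p = i")
      case True
      then show ?thesis using x y sA ed by (simp add: \<pi>_def)
    next
      case ni: False
      show ?thesis
      proof (cases "p = j")
        case True
        have "{g x, g y} \<in> pE ?A \<longleftrightarrow> {f (g x), f (g y)} \<in> pE ?B" using ed gB x y True by blast
        then show ?thesis using x y sB fg ni True by (simp add: \<pi>_def)
      next
        case False
        then show ?thesis using other[OF p ni False x] other[OF p ni False y] sO ni by (simp add: \<pi>_def)
      qed
    qed
  qed
  have edges: "\<forall>x\<in>pV H. \<forall>y\<in>pV H. {x,y} \<in> pE H \<longleftrightarrow> {\<sigma> x, \<sigma> y} \<in> pE H"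
    by (rule node_aut[OF v ne pi1 pi2 mv me])
  have labs: "\<sigma> x \<in> pV H \<and> pl H (\<sigma> x) = pl H x \<and> Lab (\<sigma> x) = Lab x" if "x \<in> pV H" for x
  proof (cases "x \<in> pV ?A")
    case True
    then show ?thesis using sA fA lab cj by auto
  next
    case False
    show ?thesis
    proof (cases "x \<in> pV ?B")
      case True
      have "pl H (f (g x)) = pl H (g x) \<and> Lab (f (g x)) = Lab (g x)" using lab gB True by blast
      then show ?thesis using True sB gB fg ci by auto
    next
      case False
      then show ?thesis using \<open>x \<notin> pV ?A\<close> sO that by simp
    qed
  qed
  obtain a where a: "a \<in> pV ?A" using ci by blast
  have fa: "f a \<in> pV ?B" by (rule fA[OF a])
  have "\<sigma> a = f a" by (rule sA[OF a])
  moreover have "f a \<noteq> a"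
  proof
    assume "f a = a"
    then have "a \<in> pV ?B" using fa by simp
    then show False using a dAB by (simp add: disjoint_iff)
  qed
  ultimately have sa: "\<sigma> a \<noteq> a" by simp
  have aH: "a \<in> pV H" using a ci(1) by (rule subsetD[rotated])
  have out: "\<forall>x. x \<notin> pV H \<longrightarrow> \<sigma> x = x"
  proof (intro allI impI)
    fix x assume "x \<notin> pV H"
    then have "x \<notin> pV ?A" "x \<notin> pV ?B" using ci(1) cj by auto
    then show "\<sigma> x = x" by (rule sO)
  qed
  have ex: "\<exists>a\<in>pV H. \<sigma> a \<noteq> a" using sa aH by (rule bexI)
  have invo': "\<forall>x. \<sigma> (\<sigma> x) = x" using invo by blast
  have labs': "\<forall>x\<in>pV H. \<sigma> x \<in> pV H \<and> pl H (\<sigma> x) = pl H x \<and> Lab (\<sigma> x) = Lab x" using labs by blast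
  show ?case unfolding dlabel.simps fst_conv
    by (intro exI[of _ \<sigma>] conjI) (rule invo' out ex labs' edges)+
next
  case (down c cs H Lab R)
  note v = down.prems
  have ne: "cs \<noteq> []" using down.hyps(1) by auto
  obtain q where q: "q < length cs" "cs!q = c" using down.hyps(1) by (auto simp: in_set_conv_nth)
  have vc: "valid_dec k c" using valid_child[OF v q(1)] q by simp
  obtain \<sigma> where s1: "\<forall>x. \<sigma> (\<sigma> x) = x" and s2: "\<forall>x. x \<notin> pV (rootg c) \<longrightarrow> \<sigma> x = x"
    and s3: "\<exists>a\<in>pV (rootg c). \<sigma> a \<noteq> a"
    and s4: "\<forall>x\<in>pV (rootg c). \<sigma> x \<in> pV (rootg c) \<and> pl (rootg c) (\<sigma> x) = pl (rootg c) x \<and> pl H (\<sigma> x) # Lab (\<sigma> x) = pl H x # Lab x"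
    and s5: "\<forall>x\<in>pV (rootg c). \<forall>y\<in>pV (rootg c). {x,y} \<in> pE (rootg c) \<longleftrightarrow> {\<sigma> x, \<sigma> y} \<in> pE (rootg c)"
    using down.IH[OF vc] by blast
  have csub: "pV (rootg c) \<subseteq> pV H" using valid_child[OF v q(1)] q by simp
  have other: "x \<notin> pV (rootg c)" if "p < length cs" "p \<noteq> q" "x \<in> pV (rootg (cs!p))" for p x
    using valid_disj[OF v that(1) q(1) that(2)] that(3) q(2) by blast
  have pi1: "\<forall>p<length cs. id p < length cs" by simp
  have pi2: "inj_on id {..<length cs}" by simp
  have mv: "\<forall>p<length cs. \<forall>x\<in>pV (rootg (cs!p)). \<sigma> x \<in> pV (rootg (cs!id p)) \<and> pl (rootg (cs!id p)) (\<sigma> x) = pl (rootg (cs!p)) x"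
  proof (intro allI impI ballI)
    fix p x assume p: "p < length cs" and x: "x \<in> pV (rootg (cs!p))"
    show "\<sigma> x \<in> pV (rootg (cs!id p)) \<and> pl (rootg (cs!id p)) (\<sigma> x) = pl (rootg (cs!p)) x"
    proof (cases "p = q")
      case True then show ?thesis using s4 x q by simp
    next
      case False then show ?thesis using other[OF p False x] s2 x by simp
    qed
  qed
  have me: "\<forall>p<length cs. \<forall>x\<in>pV (rootg (cs!p)). \<forall>y\<in>pV (rootg (cs!p)). {x,y} \<in> pE (rootg (cs!p)) \<longleftrightarrow> {\<sigma> x, \<sigma> y} \<in> pE (rootg (cs!id p))"
  proof (intro allI impI ballI)
    fix p x y assume p: "p < length cs" and x: "x \<in> pV (rootg (cs!p))" and y: "y \<in> pV (rootg (cs!p))"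
    show "{x,y} \<in> pE (rootg (cs!p)) \<longleftrightarrow> {\<sigma> x, \<sigma> y} \<in> pE (rootg (cs!id p))"
    proof (cases "p = q")
      case True then show ?thesis using s5 x y q by simp
    next
      case False then show ?thesis using other[OF p False x] other[OF p False y] s2 by simp
    qed
  qed
  have edges: "\<forall>x\<in>pV H. \<forall>y\<in>pV H. {x,y} \<in> pE H \<longleftrightarrow> {\<sigma> x, \<sigma> y} \<in> pE H"
    by (rule node_aut[OF v ne pi1 pi2 mv me])
  have labs: "\<sigma> x \<in> pV H \<and> pl H (\<sigma> x) = pl H x \<and> Lab (\<sigma> x) = Lab x" if "x \<in> pV H" for x
  proof (cases "x \<in> pV (rootg c)")
    case True then show ?thesis using s4 csub by auto
  next
    case False then show ?thesis using s2 that by simp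
  qed
  have "\<forall>x. x \<notin> pV H \<longrightarrow> \<sigma> x = x" using s2 csub by blast
  moreover have "\<exists>a\<in>pV H. \<sigma> a \<noteq> a" using s3 csub by blast
  ultimately have out: "\<forall>x. x \<notin> pV H \<longrightarrow> \<sigma> x = x" and ex: "\<exists>a\<in>pV H. \<sigma> a \<noteq> a" by blast+
  have labs': "\<forall>x\<in>pV H. \<sigma> x \<in> pV H \<and> pl H (\<sigma> x) = pl H x \<and> Lab (\<sigma> x) = Lab x" using labs by blast
  show ?case unfolding dlabel.simps fst_conv
    by (intro exI[of _ \<sigma>] conjI) (rule s1 out ex labs' edges)+
qed


definition labset :: "nat \<Rightarrow> nat \<Rightarrow> nat list set" where
  "labset K l = {xs. length xs = l \<and> set xs \<subseteq> {..<K}}"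

lemma finite_labset: "finite (labset K l)"
proof -
  have "labset K l \<subseteq> {xs. set xs \<subseteq> {..<K} \<and> length xs \<le> l}" by (auto simp: labset_def)
  then show ?thesis using finite_lists_length_le[of "{..<K}" l] finite_subset by blast
qed

definition CF :: "nat \<Rightarrow> nat \<Rightarrow> nat \<Rightarrow> (nat \<times> nat set set \<times> (nat \<times> nat list) list) set" where
  "CF b K l = {..b} \<times> Pow (Pow {0..<b}) \<times> {xs. set xs \<subseteq> {..<K} \<times> labset K l \<and> length xs \<le> b}"

lemma finite_CF: "finite (CF b K l)"
  unfolding CF_def using finite_lists_length_le[of "{..<K} \<times> labset K l" b] finite_labset by auto

definition canon :: "(nat \<Rightarrow> nat list) \<Rightarrow> pgraph \<Rightarrow> nat \<times> nat set set \<times> (nat \<times> nat list) list" where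
  "canon L A = (let s = card (pV A); h = (SOME h. bij_betw h {0..<s} (pV A)) in
     (s, (\<lambda>e. inv_into {0..<s} h ` e) ` pE A, map (\<lambda>i. (pl A (h i), L (h i))) [0..<s]))"

lemma canon_facts:
  assumes "finite (pV A)"
  shows "\<exists>h. bij_betw h {0..<card (pV A)} (pV A) \<and> canon L A = (card (pV A),
     (\<lambda>e. inv_into {0..<card (pV A)} h ` e) ` pE A, map (\<lambda>i. (pl A (h i), L (h i))) [0..<card (pV A)])"
proof -
  let ?h = "SOME h. bij_betw h {0..<card (pV A)} (pV A)"
  have "bij_betw ?h {0..<card (pV A)} (pV A)" using someI_ex[OF ex_bij_betw_nat_finite[OF assms]] .
  then show ?thesis unfolding canon_def Let_def by blast
qed

lemma img_edge:
  assumes inj: "inj_on g V" and E: "\<forall>e\<in>E. e \<subseteq> V" and x: "x \<in> V" and y: "y \<in> V"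
  shows "{g x, g y} \<in> (\<lambda>e. g ` e) ` E \<longleftrightarrow> {x,y} \<in> E"
proof
  assume "{x,y} \<in> E"
  moreover have "g ` {x,y} = {g x, g y}" by simp
  ultimately show "{g x, g y} \<in> (\<lambda>e. g ` e) ` E" by (metis imageI)
next
  assume "{g x, g y} \<in> (\<lambda>e. g ` e) ` E"
  then obtain e where e: "e \<in> E" "g ` e = {g x, g y}" by auto
  have xyV: "{x,y} \<subseteq> V" using x y by simp
  have eq: "(g ` e = g ` {x,y}) = (e = {x,y})" by (rule inj_on_image_eq_iff[OF inj _ xyV]) (use E e in blast)
  have "g ` e = g ` {x,y}" using e by simp
  then have "e = {x,y}" using eq by blast
  then show "{x,y} \<in> E" using e by simp
qed

lemma fg_edges_sub: "finite_graph (Del A) \<Longrightarrow> \<forall>e\<in>pE A. e \<subseteq> pV A"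
  unfolding finite_graph_def Del_def by auto

lemma canon_in_CF:
  assumes fg: "finite_graph (Del A)" and b: "card (pV A) \<le> b" and K: "\<forall>x\<in>pV A. pl A x < K"
    and L: "\<forall>x\<in>pV A. L x \<in> labset K l"
  shows "canon L A \<in> CF b K l"
proof -
  have fin: "finite (pV A)" using fg by (simp add: finite_graph_def Del_def)
  obtain h where h: "bij_betw h {0..<card (pV A)} (pV A)" and c: "canon L A = (card (pV A),
     (\<lambda>e. inv_into {0..<card (pV A)} h ` e) ` pE A, map (\<lambda>i. (pl A (h i), L (h i))) [0..<card (pV A)])"
    using canon_facts[OF fin] by blast
  let ?g = "inv_into {0..<card (pV A)} h"
  have g: "bij_betw ?g (pV A) {0..<card (pV A)}" using h by (rule bij_betw_inv_into)
  have E: "\<forall>e\<in>pE A. e \<subseteq> pV A" using fg_edges_sub[OF fg] .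
  have e1: "(\<lambda>e. ?g ` e) ` pE A \<in> Pow (Pow {0..<b})"
  proof (clarsimp)
    fix e x assume "e \<in> pE A" "x \<in> e"
    then have "x \<in> pV A" using E by blast
    then have "?g x < card (pV A)" using bij_betw_apply[OF g] by force
    then show "?g x < b" using b by simp
  qed
  have e2: "set (map (\<lambda>i. (pl A (h i), L (h i))) [0..<card (pV A)]) \<subseteq> {..<K} \<times> labset K l"
  proof clarsimp
    fix i assume "i < card (pV A)"
    then have "h i \<in> pV A" using bij_betw_apply[OF h] by simp
    then show "pl A (h i) < K \<and> L (h i) \<in> labset K l" using K L by blast
  qed
  show ?thesis unfolding c CF_def using b e1 e2 by simp
qed

lemma canon_eq_iso:
  assumes fA: "finite_graph (Del A)" and fB: "finite_graph (Del B)" and eq: "canon L A = canon L B"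
  shows "\<exists>f. iso_lab L A B f"
proof -
  have finA: "finite (pV A)" using fA by (simp add: finite_graph_def Del_def)
  have finB: "finite (pV B)" using fB by (simp add: finite_graph_def Del_def)
  obtain hA where hA: "bij_betw hA {0..<card (pV A)} (pV A)" and cA: "canon L A = (card (pV A),
     (\<lambda>e. inv_into {0..<card (pV A)} hA ` e) ` pE A, map (\<lambda>i. (pl A (hA i), L (hA i))) [0..<card (pV A)])"
    using canon_facts[OF finA] by blast
  obtain hB where hB: "bij_betw hB {0..<card (pV B)} (pV B)" and cB: "canon L B = (card (pV B),
     (\<lambda>e. inv_into {0..<card (pV B)} hB ` e) ` pE B, map (\<lambda>i. (pl B (hB i), L (hB i))) [0..<card (pV B)])"
    using canon_facts[OF finB] by blast
  define s where "s = card (pV A)"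
  have sB: "card (pV B) = s" using eq cA cB s_def by simp
  define gA where "gA = inv_into {0..<s} hA"
  define gB where "gB = inv_into {0..<s} hB"
  have hA': "bij_betw hA {0..<s} (pV A)" using hA s_def by simp
  have hB': "bij_betw hB {0..<s} (pV B)" using hB sB by simp
  have EE: "(\<lambda>e. gA ` e) ` pE A = (\<lambda>e. gB ` e) ` pE B" using eq cA cB sB unfolding gA_def gB_def s_def by simp
  have LL: "map (\<lambda>i. (pl A (hA i), L (hA i))) [0..<s] = map (\<lambda>i. (pl B (hB i), L (hB i))) [0..<s]"
    using eq cA cB sB unfolding s_def by simp
  have LLi: "pl A (hA i) = pl B (hB i) \<and> L (hA i) = L (hB i)" if "i < s" for i
    using LL that by auto
  have gA: "bij_betw gA (pV A) {0..<s}" unfolding gA_def by (rule bij_betw_inv_into[OF hA'])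
  have gB: "bij_betw gB (pV B) {0..<s}" unfolding gB_def by (rule bij_betw_inv_into[OF hB'])
  have hgA: "hA (gA x) = x" if "x \<in> pV A" for x using hA' that unfolding gA_def by (simp add: bij_betw_inv_into_right)
  have ghB: "gB (hB i) = i" if "i < s" for i using hB' that unfolding gB_def by (simp add: bij_betw_inv_into_left)
  have gAx: "gA x < s" if "x \<in> pV A" for x using bij_betw_apply[OF gA that] by simp
  define f where "f x = hB (gA x)" for x
  have fbij: "bij_betw f (pV A) (pV B)" unfolding f_def using bij_betw_trans[OF gA hB'] by (simp add: comp_def)
  have fV: "f x \<in> pV B" if "x \<in> pV A" for x using bij_betw_apply[OF fbij that] .
  have gBf: "gB (f x) = gA x" if "x \<in> pV A" for x unfolding f_def using ghB gAx that by simp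
  have lab: "pl B (f x) = pl A x \<and> L (f x) = L x" if "x \<in> pV A" for x
    using LLi[OF gAx[OF that]] hgA[OF that] unfolding f_def by simp
  have injA: "inj_on gA (pV A)" using gA by (simp add: bij_betw_def)
  have injB: "inj_on gB (pV B)" using gB by (simp add: bij_betw_def)
  have ed: "{x,y} \<in> pE A \<longleftrightarrow> {f x, f y} \<in> pE B" if "x \<in> pV A" "y \<in> pV A" for x y
  proof -
    have "{x,y} \<in> pE A \<longleftrightarrow> {gA x, gA y} \<in> (\<lambda>e. gA ` e) ` pE A"
      using img_edge[OF injA fg_edges_sub[OF fA] that] by simp
    also have "\<dots> \<longleftrightarrow> {gB (f x), gB (f y)} \<in> (\<lambda>e. gB ` e) ` pE B" using EE gBf that by simp
    also have "\<dots> \<longleftrightarrow> {f x, f y} \<in> pE B" using img_edge[OF injB fg_edges_sub[OF fB] fV[OF that(1)] fV[OF that(2)]] .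
    finally show ?thesis .
  qed
  show ?thesis unfolding iso_lab_def using fbij lab ed by blast
qed

fun Bd :: "nat \<Rightarrow> nat \<Rightarrow> nat \<Rightarrow> nat" where
  "Bd K 0 l = 1"
| "Bd K (Suc h) l = max 1 (card (CF (Bd K h (Suc l)) K (Suc l)) * Bd K h (Suc l))"

lemma dheight_child: "c \<in> set cs \<Longrightarrow> dheight (DNode x cs) \<le> Suc h \<Longrightarrow> dheight c \<le> h"
proof -
  assume c: "c \<in> set cs" and h: "dheight (DNode x cs) \<le> Suc h"
  have ne: "cs \<noteq> []" using c by auto
  have "dheight c \<le> Max (set (map dheight cs))" using c by (intro Max_ge) auto
  moreover have "Max (set (map dheight cs)) \<le> h" using h ne by simp
  ultimately show ?thesis by simp
qed

lemma big:
  "\<forall>t Lab l. valid_dec k t \<longrightarrow> dheight t \<le> h \<longrightarrow> k \<le> K \<longrightarrow> (\<forall>x\<in>pV (rootg t). Lab x \<in> labset K l)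
     \<longrightarrow> Bd K h l < card (pV (rootg t)) \<longrightarrow> good Lab t"
proof (induction h)
  case 0
  show ?case
  proof (intro allI impI)
    fix t Lab l assume v: "valid_dec k t" and h: "dheight t \<le> 0" and card: "Bd K 0 l < card (pV (rootg t))"
    obtain H R cs where t: "t = DNode (H,R) cs" by (metis dtree.exhaust surj_pair)
    have "cs = []" using h t by (cases cs) auto
    then have "card (pV H) = 1" using valid_leaf_inv v t by blast
    then show "good Lab t" using card t by simp
  qed
next
  case (Suc h)
  show ?case
  proof (intro allI impI)
    fix t Lab l assume v: "valid_dec k t" and h: "dheight t \<le> Suc h" and kK: "k \<le> K"
      and lab: "\<forall>x\<in>pV (rootg t). Lab x \<in> labset K l" and card: "Bd K (Suc h) l < card (pV (rootg t))"
    obtain H R cs where t: "t = DNode (H,R) cs" by (metis dtree.exhaust surj_pair)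
    have v': "valid_dec k (DNode (H,R) cs)" using v t by simp
    show "good Lab t"
    proof (cases "cs = []")
      case True
      then have "card (pV H) = 1" using valid_leaf_inv v t by blast
      then show ?thesis using card t by simp
    next
      case ne: False
      define b where "b = Bd K h (Suc l)"
      define Lab' where "Lab' x = pl H x # Lab x" for x
      note I = valid_node_inv[OF v' ne]
      have plH: "\<forall>x\<in>pV H. pl H x < K" using I kK by (auto simp: ports_in_def)
      have cf: "valid_dec k (cs!p) \<and> dheight (cs!p) \<le> h \<and> (\<forall>x\<in>pV (rootg (cs!p)). Lab' x \<in> labset K (Suc l))
         \<and> finite_graph (Del (rootg (cs!p))) \<and> (\<forall>x\<in>pV (rootg (cs!p)). pl (rootg (cs!p)) x < K)"
        if p: "p < length cs" for p
      proof -
        note vc = valid_child[OF v' p]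
        have "dheight (cs!p) \<le> h" using dheight_child[of "cs!p" cs "(H,R)" h] p h t by simp
        moreover have "\<forall>x\<in>pV (rootg (cs!p)). Lab' x \<in> labset K (Suc l)"
        proof
          fix x assume "x \<in> pV (rootg (cs!p))"
          then have "x \<in> pV H" using vc by blast
          then show "Lab' x \<in> labset K (Suc l)" using lab plH t by (auto simp: Lab'_def labset_def)
        qed
        ultimately show ?thesis using vc kK by auto
      qed
      show ?thesis
      proof (cases "\<exists>p<length cs. b < card (pV (rootg (cs!p)))")
        case True
        then obtain p where p: "p < length cs" "b < card (pV (rootg (cs!p)))" by blast
        have "good Lab' (cs!p)" using Suc.IH cf[OF p(1)] p(2) kK unfolding b_def by blast
        then show ?thesis unfolding t Lab'_def using good.down[of "cs!p" cs H Lab R] p(1) by simp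
      next
        case small: False
        show ?thesis
        proof (cases "\<exists>p<length cs. \<exists>q<length cs. p \<noteq> q \<and> canon Lab' (rootg (cs!p)) = canon Lab' (rootg (cs!q))")
          case True
          then obtain p q where pq: "p < length cs" "q < length cs" "p \<noteq> q"
            "canon Lab' (rootg (cs!p)) = canon Lab' (rootg (cs!q))" by blast
          obtain f where "iso_lab Lab' (rootg (cs!p)) (rootg (cs!q)) f"
            using canon_eq_iso[OF _ _ pq(4)] cf[OF pq(1)] cf[OF pq(2)] by blast
          then show ?thesis unfolding t Lab'_def using good.swap[OF pq(1,2,3)] by blast
        next
          case False
          let ?c = "\<lambda>p. canon Lab' (rootg (cs!p))"
          have inj: "inj_on ?c {..<length cs}" using False by (auto simp: inj_on_def)
          have sub: "?c ` {..<length cs} \<subseteq> CF b K (Suc l)"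
          proof clarsimp
            fix p assume p: "p < length cs"
            show "?c p \<in> CF b K (Suc l)"
              using canon_in_CF[of "rootg (cs!p)" b K Lab' "Suc l"] cf[OF p] small p by force
          qed
          have len: "length cs \<le> card (CF b K (Suc l))"
            using card_inj_on_le[OF inj sub finite_CF] by simp
          have V: "pV H = (\<Union>p<length cs. pV (rootg (cs!p)))"
            using valid_children_V[OF v' ne] UN_set_nth[of "\<lambda>t. pV (rootg t)" cs] by simp
          have cU: "card (pV H) \<le> (\<Sum>p<length cs. card (pV (rootg (cs!p))))" unfolding V by (rule card_UN_le) simp
          have sm: "card (pV (rootg (cs!p))) \<le> b" if "p < length cs" for p
            using small that not_less by blast
          have "(\<Sum>p<length cs. card (pV (rootg (cs!p)))) \<le> (\<Sum>p<length cs. b)"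
            by (rule sum_mono) (use sm in simp)
          also have "\<dots> = length cs * b" by simp
          also have "\<dots> \<le> card (CF b K (Suc l)) * b" using len by simp
          also have "\<dots> \<le> Bd K (Suc h) l" by (simp add: b_def)
          finally show ?thesis using card t cU by (auto simp: max_def split: if_splits)
        qed
      qed
    qed
  qed
qed


fun Kf :: "nat \<Rightarrow> nat \<Rightarrow> nat" where
  "Kf k 0 = k"
| "Kf k (Suc h) = Kf k h * (k+1) + (k+1)"

lemma Kf_mono: "h \<le> h' \<Longrightarrow> Kf k h \<le> Kf k h'"
  by (rule lift_Suc_mono_le[of "Kf k"]) simp_all

lemma enc_div: "(b::nat) \<le> k \<Longrightarrow> (u*(k+1)+b) div (k+1) = u \<and> (u*(k+1)+b) mod (k+1) = b"
proof -
  assume "b \<le> k"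
  then have bl: "b < k+1" by simp
  have "(u*(k+1)+b) div (k+1) = u + b div (k+1)" by (rule div_mult_self3) simp
  moreover have "b div (k+1) = 0" using bl by (rule div_less)
  moreover have "(u*(k+1)+b) mod (k+1) = b mod (k+1)" by (rule mod_mult_self3)
  moreover have "b mod (k+1) = b" using bl by (rule mod_less)
  ultimately show ?thesis by simp
qed

lemma enc_unique: "(b1::nat) \<le> k \<Longrightarrow> b2 \<le> k \<Longrightarrow> u*(k+1)+b1 = u'*(k+1)+b2 \<Longrightarrow> u = u' \<and> b1 = b2"
  by (metis enc_div)

lemma enc_lt: "(u::nat) < K' \<Longrightarrow> b \<le> k \<Longrightarrow> u*(k+1)+b < K'*(k+1)"
proof -
  assume "u < K'" "b \<le> k"
  then have "Suc u * (k+1) \<le> K' * (k+1)" by (intro mult_le_mono1) simp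
  then show ?thesis using \<open>b \<le> k\<close> by simp
qed

lemma port:
  "valid_dec k t \<Longrightarrow> \<forall>h v Hv Rv cs. dheight t \<le> h \<longrightarrow> v \<in> subtrees t \<longrightarrow> v = DNode (Hv,Rv) cs \<longrightarrow> cs \<noteq> [] \<longrightarrow>
     (\<exists>p R'. sym R' \<and> (\<forall>x\<in>pV (rootg t). p x < Kf k h) \<and>
       (\<forall>x\<in>pV (rootg t). \<forall>y\<in>pV (rootg t). \<not>(\<exists>i<length cs. x \<in> pV (rootg (cs!i)) \<and> y \<in> pV (rootg (cs!i)))
          \<longrightarrow> \<not>(x \<notin> pV Hv \<and> y \<notin> pV Hv) \<longrightarrow> ({x,y} \<in> pE (rootg t) \<longleftrightarrow> (p x, p y) \<in> R')))"
proof (induction rule: valid_dec.induct)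
  case (leaf H R)
  show ?case
  proof (intro allI impI)
    fix h v Hv Rv cs assume "v \<in> subtrees (DNode (H,R) [])" "v = DNode (Hv,Rv) cs" "cs \<noteq> []"
    then show "\<exists>p R'. sym R' \<and> (\<forall>x\<in>pV (rootg (DNode (H, R) []) ). p x < Kf k h) \<and>
       (\<forall>x\<in>pV (rootg (DNode (H, R) [])). \<forall>y\<in>pV (rootg (DNode (H, R) [])). \<not>(\<exists>i<length cs. x \<in> pV (rootg (cs!i)) \<and> y \<in> pV (rootg (cs!i)))
          \<longrightarrow> \<not>(x \<notin> pV Hv \<and> y \<notin> pV Hv) \<longrightarrow> ({x,y} \<in> pE (rootg (DNode (H, R) [])) \<longleftrightarrow> (p x, p y) \<in> R'))"
      by simp
  qed
next
  case (node H ts R)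
  have allv: "\<forall>t\<in>set ts. valid_dec k t" using node(5) by blast
  have v0: "valid_dec k (DNode (H,R) ts)" by (rule valid_dec.node[OF node(1,2) allv node(3,4)])
  have V: "pV H = (\<Union>i<length ts. pV (rootg (ts!i)))"
    using valid_children_V[OF v0 node(2)] UN_set_nth[of "\<lambda>t. pV (rootg t)" ts] by simp
  define idx where "idx x = (SOME i. i < length ts \<and> x \<in> pV (rootg (ts!i)))" for x
  have idx: "idx x < length ts \<and> x \<in> pV (rootg (ts ! idx x))" if "x \<in> pV H" for x
  proof -
    have "\<exists>i. i < length ts \<and> x \<in> pV (rootg (ts!i))" using that V by auto
    then show ?thesis unfolding idx_def by (rule someI_ex)
  qed
  have idx_u: "idx x = i" if "i < length ts" "x \<in> pV (rootg (ts!i))" for x i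
  proof (rule ccontr)
    assume ne: "idx x \<noteq> i"
    have xH: "x \<in> pV H" using V that by blast
    show False using valid_disj[OF v0 _ that(1) ne] idx[OF xH] that(2) by blast
  qed
  have plk: "pl (rootg (ts!i)) x < k" if "i < length ts" "x \<in> pV (rootg (ts!i))" for x i
    using valid_child[OF v0 that(1)] that(2) by blast
  show ?case
  proof (intro allI impI)
    fix h v Hv Rv cs assume h: "dheight (DNode (H,R) ts) \<le> h" and vs: "v \<in> subtrees (DNode (H,R) ts)"
      and vv: "v = DNode (Hv,Rv) cs" and ne: "cs \<noteq> []"
    have main: "\<exists>p R'. sym R' \<and> (\<forall>x\<in>pV H. p x < Kf k h) \<and>
       (\<forall>x\<in>pV H. \<forall>y\<in>pV H. \<not>(\<exists>i<length cs. x \<in> pV (rootg (cs!i)) \<and> y \<in> pV (rootg (cs!i)))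
          \<longrightarrow> \<not>(x \<notin> pV Hv \<and> y \<notin> pV Hv) \<longrightarrow> ({x,y} \<in> pE H \<longleftrightarrow> (p x, p y) \<in> R'))"
    proof (cases "v = DNode (H,R) ts")
      case True
      then have Hv: "Hv = H" "cs = ts" using vv by auto
      define p where "p x = pl (rootg (ts ! idx x)) x" for x
      define R' where "R' = {(a,b). (a,b) \<in> R \<or> (b,a) \<in> R}"
      have symR: "sym R'" by (auto simp: sym_def R'_def)
      have kh: "k \<le> Kf k h" using Kf_mono[of 0 h k] by simp
      have ports: "\<forall>x\<in>pV H. p x < Kf k h"
      proof
        fix x assume "x \<in> pV H"
        then have "p x < k" unfolding p_def using idx plk by blast
        then show "p x < Kf k h" using kh by simp
      qed
      have cond: "\<forall>x\<in>pV H. \<forall>y\<in>pV H. \<not>(\<exists>i<length cs. x \<in> pV (rootg (cs!i)) \<and> y \<in> pV (rootg (cs!i)))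
          \<longrightarrow> \<not>(x \<notin> pV Hv \<and> y \<notin> pV Hv) \<longrightarrow> ({x,y} \<in> pE H \<longleftrightarrow> (p x, p y) \<in> R')"
      proof (intro ballI impI)
        fix x y assume x: "x \<in> pV H" and y: "y \<in> pV H"
          and ns: "\<not>(\<exists>i<length cs. x \<in> pV (rootg (cs!i)) \<and> y \<in> pV (rootg (cs!i)))"
        note ix = idx[OF x] and iy = idx[OF y]
        have dif: "idx x \<noteq> idx y" using ns ix iy Hv by auto
        have "{x,y} \<in> pE H \<longleftrightarrow> (pl (rootg (ts!idx x)) x, pl (rootg (ts!idx y)) y) \<in> R
             \<or> (pl (rootg (ts!idx y)) y, pl (rootg (ts!idx x)) x) \<in> R"
          using valid_edges[OF v0 ix(1)[THEN conjunct1] iy[THEN conjunct1] ix[THEN conjunct2] iy[THEN conjunct2]] dif by simp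
        then show "{x,y} \<in> pE H \<longleftrightarrow> (p x, p y) \<in> R'" by (simp add: p_def R'_def)
      qed
      show ?thesis using symR ports cond by blast
    next
      case False
      then obtain c where c: "c \<in> set ts" "v \<in> subtrees c" using vs by auto
      obtain q where q: "q < length ts" "ts!q = c" using c(1) by (auto simp: in_set_conv_nth)
      obtain h' where h': "h = Suc h'" using h node(2) by (cases h) auto
      have hc: "dheight c \<le> h'" using dheight_child[OF c(1)] h h' by simp
      have IHc: "valid_dec k c \<and> (\<forall>h v Hv Rv cs. dheight c \<le> h \<longrightarrow> v \<in> subtrees c \<longrightarrow> v = DNode (Hv,Rv) cs \<longrightarrow> cs \<noteq> [] \<longrightarrow>
     (\<exists>p R'. sym R' \<and> (\<forall>x\<in>pV (rootg c). p x < Kf k h) \<and>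
       (\<forall>x\<in>pV (rootg c). \<forall>y\<in>pV (rootg c). \<not>(\<exists>i<length cs. x \<in> pV (rootg (cs!i)) \<and> y \<in> pV (rootg (cs!i)))
          \<longrightarrow> \<not>(x \<notin> pV Hv \<and> y \<notin> pV Hv) \<longrightarrow> ({x,y} \<in> pE (rootg c) \<longleftrightarrow> (p x, p y) \<in> R'))))"
        using bspec[OF node(5) c(1)] .
      obtain p' R' where symR': "sym R'" and pp': "\<forall>x\<in>pV (rootg c). p' x < Kf k h'"
        and condc: "\<forall>x\<in>pV (rootg c). \<forall>y\<in>pV (rootg c). \<not>(\<exists>i<length cs. x \<in> pV (rootg (cs!i)) \<and> y \<in> pV (rootg (cs!i)))
          \<longrightarrow> \<not>(x \<notin> pV Hv \<and> y \<notin> pV Hv) \<longrightarrow> ({x,y} \<in> pE (rootg c) \<longleftrightarrow> (p' x, p' y) \<in> R')"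
        using IHc[THEN conjunct2, rule_format, OF hc c(2) vv ne] by blast
      have vc: "valid_dec k c" using IHc by blast
      have HvHc: "pV Hv \<subseteq> pV (rootg c)" using valid_subtrees[OF vc c(2)] vv by simp
      have HcH: "pV (rootg c) \<subseteq> pV H" using valid_child[OF v0 q(1)] q(2) by simp
      have plc: "pl (rootg c) x < k" if "x \<in> pV (rootg c)" for x using plk[OF q(1)] q(2) that by blast
      define K' where "K' = Kf k h'"
      define Hc where "Hc = rootg c"
      define p where "p x = (if x \<in> pV Hc then p' x * (k+1) + pl Hc x
          else K' * (k+1) + pl (rootg (ts ! idx x)) x)" for x
      define X where "X = {(a,b). \<exists>u b1 c1. a = u*(k+1)+b1 \<and> u < K' \<and> b1 \<le> k \<and> c1 \<le> k
          \<and> b = K'*(k+1)+c1 \<and> ((b1,c1) \<in> R \<or> (c1,b1) \<in> R)}"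
      define R1 where "R1 = {(a,b). \<exists>u u' b1 b2. a = u*(k+1)+b1 \<and> b = u'*(k+1)+b2 \<and> u < K' \<and> u' < K'
          \<and> b1 \<le> k \<and> b2 \<le> k \<and> (u,u') \<in> R'}"
      define R2 where "R2 = R1 \<union> X \<union> X\<inverse>"
      have symR2: "sym R2"
      proof -
        have "sym R1" using symR' unfolding sym_def R1_def by blast
        then show ?thesis unfolding R2_def sym_def by blast
      qed
      have pin: "p x = p' x * (k+1) + pl Hc x \<and> p' x < K' \<and> pl Hc x \<le> k" if "x \<in> pV Hc" for x
        using that pp' plc unfolding p_def K'_def Hc_def by (simp add: less_imp_le)
      have pout: "p x = K' * (k+1) + pl (rootg (ts ! idx x)) x \<and> pl (rootg (ts ! idx x)) x \<le> k"
        if "x \<in> pV H" "x \<notin> pV Hc" for x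
        using that plk idx unfolding p_def by (simp add: less_imp_le)
      have pinlt: "p x < K'*(k+1)" if "x \<in> pV Hc" for x using pin[OF that] enc_lt by simp
      have R1lt: "a < K'*(k+1) \<and> b < K'*(k+1)" if "(a,b) \<in> R1" for a b
        using that enc_lt unfolding R1_def by auto
      have Xlt: "a < K'*(k+1) \<and> K'*(k+1) \<le> b" if "(a,b) \<in> X" for a b
        using that enc_lt unfolding X_def by auto
      have ports: "\<forall>x\<in>pV H. p x < Kf k h"
      proof
        fix x assume x: "x \<in> pV H"
        show "p x < Kf k h"
        proof (cases "x \<in> pV Hc")
          case True
          then have "p x < K'*(k+1)" by (rule pinlt)
          then show ?thesis using h' K'_def by simp
        next
          case False
          then show ?thesis using pout[OF x False] h' K'_def by simp
        qed
      qed
      have inin: "{x,y} \<in> pE H \<longleftrightarrow> (p x, p y) \<in> R2" if x: "x \<in> pV Hc" and y: "y \<in> pV Hc"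
         and ns: "\<not>(\<exists>i<length cs. x \<in> pV (rootg (cs!i)) \<and> y \<in> pV (rootg (cs!i)))"
         and no: "\<not>(x \<notin> pV Hv \<and> y \<notin> pV Hv)" for x y
      proof -
        have e1: "{x,y} \<in> pE H \<longleftrightarrow> {x,y} \<in> pE Hc"
          using valid_edges[OF v0 q(1) q(1)] x y q(2) unfolding Hc_def by simp
        have e2: "{x,y} \<in> pE Hc \<longleftrightarrow> (p' x, p' y) \<in> R'" using condc x y ns no unfolding Hc_def by blast
        have n1: "(p x, p y) \<notin> X"
        proof
          assume "(p x, p y) \<in> X"
          then have "K'*(k+1) \<le> p y" using Xlt by blast
          then show False using pinlt[OF y] by simp
        qed
        have n2: "(p y, p x) \<notin> X"
        proof
          assume "(p y, p x) \<in> X"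
          then have "K'*(k+1) \<le> p x" using Xlt by blast
          then show False using pinlt[OF x] by simp
        qed
        have e3: "(p x, p y) \<in> R2 \<longleftrightarrow> (p x, p y) \<in> R1"
          using n1 n2 unfolding R2_def by auto
        have e4: "(p x, p y) \<in> R1 \<longleftrightarrow> (p' x, p' y) \<in> R'"
        proof
          assume "(p x, p y) \<in> R1"
          then obtain u u' b1 b2 where w: "p x = u*(k+1)+b1" "p y = u'*(k+1)+b2" "b1 \<le> k" "b2 \<le> k" "(u,u') \<in> R'"
            unfolding R1_def by blast
          have "u = p' x" using enc_unique[OF w(3) _ ] w(1) pin[OF x] by metis
          moreover have "u' = p' y" using enc_unique[OF w(4) _ ] w(2) pin[OF y] by metis
          ultimately show "(p' x, p' y) \<in> R'" using w(5) by simp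
        next
          assume "(p' x, p' y) \<in> R'"
          then show "(p x, p y) \<in> R1" unfolding R1_def using pin[OF x] pin[OF y] by blast
        qed
        show ?thesis using e1 e2 e3 e4 by simp
      qed
      have mixed: "{x,y} \<in> pE H \<longleftrightarrow> (p x, p y) \<in> R2" if x: "x \<in> pV Hc" and y: "y \<in> pV H" "y \<notin> pV Hc" for x y
      proof -
        note iy = idx[OF y(1)]
        have jq: "idx y \<noteq> q" using iy y(2) q(2) unfolding Hc_def by auto
        have xq: "x \<in> pV (rootg (ts!q))" using x q(2) unfolding Hc_def by simp
        let ?cy = "pl (rootg (ts ! idx y)) y"
        have e1: "{x,y} \<in> pE H \<longleftrightarrow> (pl Hc x, ?cy) \<in> R \<or> (?cy, pl Hc x) \<in> R"
          using valid_edges[OF v0 q(1) iy[THEN conjunct1] xq iy[THEN conjunct2]] jq q(2) unfolding Hc_def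
          by (simp add: eq_commute[of _ q])
        have e3: "(p x, p y) \<in> R2 \<longleftrightarrow> (p x, p y) \<in> X"
        proof -
          have py: "p y \<ge> K'*(k+1)" using pout[OF y] by simp
          have n1: "(p x, p y) \<notin> R1"
          proof
            assume "(p x, p y) \<in> R1"
            then have "p y < K'*(k+1)" using R1lt by blast
            then show False using py by simp
          qed
          have n2: "(p y, p x) \<notin> X"
          proof
            assume "(p y, p x) \<in> X"
            then have "p y < K'*(k+1)" using Xlt by blast
            then show False using py by simp
          qed
          show ?thesis using n1 n2 unfolding R2_def by auto
        qed
        have e4: "(p x, p y) \<in> X \<longleftrightarrow> (pl Hc x, ?cy) \<in> R \<or> (?cy, pl Hc x) \<in> R"
        proof
          assume "(p x, p y) \<in> X"
          then obtain u b1 c1 where w: "p x = u*(k+1)+b1" "b1 \<le> k" "c1 \<le> k" "p y = K'*(k+1)+c1"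
              "(b1,c1) \<in> R \<or> (c1,b1) \<in> R" unfolding X_def by blast
          have "b1 = pl Hc x" using enc_unique[OF w(2) _ ] w(1) pin[OF x] by metis
          moreover have "c1 = ?cy" using w(4) pout[OF y] by simp
          ultimately show "(pl Hc x, ?cy) \<in> R \<or> (?cy, pl Hc x) \<in> R" using w(5) by simp
        next
          assume a: "(pl Hc x, ?cy) \<in> R \<or> (?cy, pl Hc x) \<in> R"
          show "(p x, p y) \<in> X" unfolding X_def using pin[OF x] pout[OF y] a by blast
        qed
        show ?thesis using e1 e3 e4 by simp
      qed
      have cond: "\<forall>x\<in>pV H. \<forall>y\<in>pV H. \<not>(\<exists>i<length cs. x \<in> pV (rootg (cs!i)) \<and> y \<in> pV (rootg (cs!i)))
          \<longrightarrow> \<not>(x \<notin> pV Hv \<and> y \<notin> pV Hv) \<longrightarrow> ({x,y} \<in> pE H \<longleftrightarrow> (p x, p y) \<in> R2)"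
      proof (intro ballI impI)
        fix x y assume x: "x \<in> pV H" and y: "y \<in> pV H"
          and ns: "\<not>(\<exists>i<length cs. x \<in> pV (rootg (cs!i)) \<and> y \<in> pV (rootg (cs!i)))"
          and no: "\<not>(x \<notin> pV Hv \<and> y \<notin> pV Hv)"
        show "{x,y} \<in> pE H \<longleftrightarrow> (p x, p y) \<in> R2"
        proof (cases "x \<in> pV Hc")
          case xin: True
          show ?thesis
          proof (cases "y \<in> pV Hc")
            case True show ?thesis using inin[OF xin True ns no] .
          next
            case False show ?thesis using mixed[OF xin y False] .
          qed
        next
          case xout: False
          show ?thesis
          proof (cases "y \<in> pV Hc")
            case True
            have "{y,x} \<in> pE H \<longleftrightarrow> (p y, p x) \<in> R2" using mixed[OF True x xout] .
            moreover have "{y,x} = {x,y}" by (rule insert_commute)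
            moreover have "(p y, p x) \<in> R2 \<longleftrightarrow> (p x, p y) \<in> R2" using symR2 unfolding sym_def by blast
            ultimately show ?thesis by simp
          next
            case False
            then show ?thesis using xout no HvHc unfolding Hc_def by blast
          qed
        qed
      qed
      show ?thesis using symR2 ports cond by blast
    qed
    then show "\<exists>p R'. sym R' \<and> (\<forall>x\<in>pV (rootg (DNode (H, R) ts)). p x < Kf k h) \<and>
       (\<forall>x\<in>pV (rootg (DNode (H, R) ts)). \<forall>y\<in>pV (rootg (DNode (H, R) ts)). \<not>(\<exists>i<length cs. x \<in> pV (rootg (cs!i)) \<and> y \<in> pV (rootg (cs!i)))
          \<longrightarrow> \<not>(x \<notin> pV Hv \<and> y \<notin> pV Hv) \<longrightarrow> ({x,y} \<in> pE (rootg (DNode (H, R) ts)) \<longleftrightarrow> (p x, p y) \<in> R'))"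
      by simp
  qed
qed


lemma partition_cut:
  assumes fg: "finite_graph (V,E)" and ne: "\<forall>i<length Bs. Bs!i \<noteq> {}"
    and dj: "\<forall>i<length Bs. \<forall>j<length Bs. i \<noteq> j \<longrightarrow> Bs!i \<inter> Bs!j = {}"
    and un: "(\<Union>i<length Bs. Bs!i) = V" and pk: "\<forall>x\<in>V. p x < K"
    and cr: "\<forall>i<length Bs. \<forall>j<length Bs. i \<noteq> j \<longrightarrow> (\<forall>x\<in>Bs!i. \<forall>y\<in>Bs!j. {x,y} \<in> E \<longleftrightarrow> (p x, p y) \<in> R)"
  shows "cut_rep (V,E) K (length Bs)"
proof -
  define Hs where "Hs = map (\<lambda>B. \<lparr>pV = B, pE = {e\<in>E. e \<subseteq> B}, pl = p\<rparr>) Bs"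
  have lenH: "length Hs = length Bs" by (simp add: Hs_def)
  have Hi: "pV (Hs!i) = Bs!i \<and> pE (Hs!i) = {e\<in>E. e \<subseteq> Bs!i} \<and> pl (Hs!i) = p" if "i < length Bs" for i
    using that by (simp add: Hs_def)
  have Esub: "\<exists>x y. e = {x,y} \<and> x \<in> V \<and> y \<in> V \<and> x \<noteq> y" if "e \<in> E" for e
    using fg that unfolding finite_graph_def by auto
  have finV: "finite V" using fg by (simp add: finite_graph_def)
  have BV: "Bs!i \<subseteq> V" if "i < length Bs" for i using un that by blast
  have parts: "\<forall>H\<in>set Hs. pV H \<noteq> {} \<and> ports_in K H"
  proof
    fix H assume "H \<in> set Hs"
    then obtain i where i: "i < length Bs" "H = Hs!i" using lenH by (auto simp: in_set_conv_nth)
    have "finite (Bs!i)" using BV[OF i(1)] finV finite_subset by blast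
    moreover have "{e\<in>E. e \<subseteq> Bs!i} \<subseteq> {{x, y} | x y. x \<in> Bs!i \<and> y \<in> Bs!i \<and> x \<noteq> y}"
    proof
      fix e assume "e \<in> {e\<in>E. e \<subseteq> Bs!i}"
      then obtain x y where "e = {x,y}" "x \<noteq> y" "e \<subseteq> Bs!i" using Esub by blast
      then show "e \<in> {{x, y} | x y. x \<in> Bs!i \<and> y \<in> Bs!i \<and> x \<noteq> y}" by blast
    qed
    ultimately show "pV H \<noteq> {} \<and> ports_in K H"
      using Hi[OF i(1)] i ne pk BV[OF i(1)] unfolding ports_in_def finite_graph_def Del_def by auto
  qed
  have djH: "disjoint_ops Hs" unfolding disjoint_ops_def using dj Hi lenH by simp
  have T1: "(\<Union>H\<in>set Hs. pV H) = V"
    using UN_set_nth[of pV Hs] lenH Hi un by simp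
  have T2: "(\<Union>H\<in>set Hs. pE H) \<union> {{x, y} | x y i j. i < length Hs \<and> j < length Hs \<and> i \<noteq> j \<and>
         x \<in> pV (Hs!i) \<and> y \<in> pV (Hs!j) \<and> (pl (Hs!i) x, pl (Hs!j) y) \<in> R} = E"
  proof (intro equalityI subsetI)
    fix e assume "e \<in> (\<Union>H\<in>set Hs. pE H) \<union> {{x, y} | x y i j. i < length Hs \<and> j < length Hs \<and> i \<noteq> j \<and>
         x \<in> pV (Hs!i) \<and> y \<in> pV (Hs!j) \<and> (pl (Hs!i) x, pl (Hs!j) y) \<in> R}"
    then show "e \<in> E"
    proof
      assume "e \<in> (\<Union>H\<in>set Hs. pE H)"
      then obtain i where "i < length Bs" "e \<in> pE (Hs!i)" using lenH by (auto simp: in_set_conv_nth)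
      then show "e \<in> E" using Hi by auto
    next
      assume "e \<in> {{x, y} | x y i j. i < length Hs \<and> j < length Hs \<and> i \<noteq> j \<and>
         x \<in> pV (Hs!i) \<and> y \<in> pV (Hs!j) \<and> (pl (Hs!i) x, pl (Hs!j) y) \<in> R}"
      then obtain x y i j where w: "e = {x,y}" "i < length Bs" "j < length Bs" "i \<noteq> j"
        "x \<in> Bs!i" "y \<in> Bs!j" "(p x, p y) \<in> R" using lenH Hi by auto
      have "{x,y} \<in> E \<longleftrightarrow> (p x, p y) \<in> R" using cr[rule_format, OF w(2) w(3) w(4) w(5) w(6)] .
      then show "e \<in> E" using w(1) w(7) by simp
    qed
  next
    fix e assume eE: "e \<in> E"
    then obtain x y where xy: "e = {x,y}" "x \<in> V" "y \<in> V" using Esub by blast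
    obtain i where i: "i < length Bs" "x \<in> Bs!i" using xy(2) un by auto
    obtain j where j: "j < length Bs" "y \<in> Bs!j" using xy(3) un by auto
    show "e \<in> (\<Union>H\<in>set Hs. pE H) \<union> {{x, y} | x y i j. i < length Hs \<and> j < length Hs \<and> i \<noteq> j \<and>
         x \<in> pV (Hs!i) \<and> y \<in> pV (Hs!j) \<and> (pl (Hs!i) x, pl (Hs!j) y) \<in> R}"
    proof (cases "i = j")
      case True
      then have "e \<in> pE (Hs!i)" using Hi[OF i(1)] eE xy i j by auto
      moreover have "Hs!i \<in> set Hs" using i lenH by simp
      ultimately show ?thesis by blast
    next
      case False
      have "{x,y} \<in> E" using eE xy(1) by simp
      then have pR: "(p x, p y) \<in> R" using cr[rule_format, OF i(1) j(1) False i(2) j(2)] by simp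
      have w: "i < length Hs \<and> j < length Hs \<and> i \<noteq> j \<and> x \<in> pV (Hs!i) \<and> y \<in> pV (Hs!j) \<and> (pl (Hs!i) x, pl (Hs!j) y) \<in> R"
        using False i j Hi[OF i(1)] Hi[OF j(1)] lenH pR by simp
      have "e \<in> {{x, y} | x y i j. i < length Hs \<and> j < length Hs \<and> i \<noteq> j \<and>
         x \<in> pV (Hs!i) \<and> y \<in> pV (Hs!j) \<and> (pl (Hs!i) x, pl (Hs!j) y) \<in> R}"
        unfolding xy(1) using w by blast
      then show ?thesis by blast
    qed
  qed
  have T: "tensor_Del R Hs = (V,E)" unfolding tensor_Del_def using T1 T2 by simp
  have iso: "graph_iso (V,E) (V,E)" unfolding graph_iso_def by (intro exI[of _ id]) simp
  show ?thesis unfolding cut_rep_def using lenH parts djH iso T by metis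
qed

lemma cut_le_card:
  assumes fin: "finite (fst G)" and c: "cut_rep G K m"
  shows "m \<le> card (fst G)"
proof -
  obtain Hs R where Hs: "length Hs = m" "\<forall>H\<in>set Hs. pV H \<noteq> {} \<and> ports_in K H" "disjoint_ops Hs"
    "graph_iso G (tensor_Del R Hs)" using c unfolding cut_rep_def by blast
  obtain f where f: "bij_betw f (fst G) (fst (tensor_Del R Hs))" using Hs(4) unfolding graph_iso_def by blast
  have U: "fst (tensor_Del R Hs) = (\<Union>i<m. pV (Hs!i))"
    using UN_set_nth[of pV Hs] Hs(1) by (simp add: tensor_Del_def)
  have cardeq: "card (fst G) = card (\<Union>i<m. pV (Hs!i))" using bij_betw_same_card[OF f] U by simp
  have finU: "finite (\<Union>i<m. pV (Hs!i))" using bij_betw_finite[OF f] fin U by simp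
  have "m \<le> card (\<Union>i<m. pV (Hs!i))"
  proof (rule len_le_card_union[OF finU])
    show "\<forall>i<m. pV (Hs!i) \<noteq> {}" using Hs(1,2) by simp
    show "\<forall>i<m. \<forall>j<m. i \<noteq> j \<longrightarrow> pV (Hs!i) \<inter> pV (Hs!j) = {}" using Hs(1,3) by (simp add: disjoint_ops_def)
  qed
  then show ?thesis using cardeq by simp
qed

lemma Cut_ge: "finite (fst G) \<Longrightarrow> cut_rep G K m \<Longrightarrow> m \<le> Cut G K"
  unfolding Cut_def by (rule Greatest_le_nat[where b = "card (fst G)"]) (auto intro: cut_le_card)

lemma outdeg_from_subtrees: "(\<forall>v\<in>subtrees t. length (dchildren v) \<le> d) \<Longrightarrow> outdeg_le d t"
proof (induction t)
  case (DNode x ts)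
  have "length ts \<le> d" using DNode.prems by simp
  moreover have "\<forall>t\<in>set ts. outdeg_le d t"
  proof
    fix t assume t: "t \<in> set ts"
    then have "\<forall>v\<in>subtrees t. length (dchildren v) \<le> d" using DNode.prems by auto
    then show "outdeg_le d t" using DNode.IH[OF t] by blast
  qed
  ultimately show ?case by (rule outdeg_le.intros)
qed

lemma dec_of_wd:
  assumes a: "wd_tensor n G \<le> enat k"
  shows "\<exists>t. is_dec_of G k t \<and> dheight t \<le> n"
proof -
  let ?P = "\<lambda>k0. \<exists>t. is_dec_of G k0 t \<and> dheight t \<le> n"
  have ex: "\<exists>k0. ?P k0"
  proof (rule ccontr)
    assume "\<not> (\<exists>k0. ?P k0)"
    then have "wd_tensor n G = \<infinity>" unfolding wd_tensor_def by auto
    then show False using a by simp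
  qed
  have "wd_tensor n G = enat (LEAST k0. ?P k0)" using ex unfolding wd_tensor_def by auto
  then have le: "(LEAST k0. ?P k0) \<le> k" using a by simp
  have "?P (LEAST k0. ?P k0)" using ex by (rule LeastI_ex)
  then obtain t where t: "is_dec_of G (LEAST k0. ?P k0) t" "dheight t \<le> n" by blast
  then show ?thesis using valid_dec_mono[OF _ le] unfolding is_dec_of_def by blast
qed

lemma dec_root: "is_dec_of G k t \<Longrightarrow> fst G = pV (rootg t) \<and> snd G = pE (rootg t) \<and> valid_dec k t"
  unfolding is_dec_of_def Del_def by auto


lemma mso_bounded:
  assumes fg: "\<forall>G\<in>C. finite_graph G" and wd: "\<forall>G\<in>C. wd_tensor n G \<le> enat k" and mso: "MSO_orderable C"
  shows "\<exists>N. \<forall>G\<in>C. card (fst G) \<le> N"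
proof -
  obtain \<phi> m where fv: "fv2 \<phi> \<subseteq> {..<m}" and ord: "\<forall>G\<in>C. fst G \<noteq> {} \<longrightarrow>
        (\<exists>P :: nat \<Rightarrow> nat set. (\<forall>i<m. P i \<subseteq> fst G) \<and>
           linear_order_on (fst G)
             {(a, b). a \<in> fst G \<and> b \<in> fst G \<and> sat G (\<lambda>i. if i = 0 then a else b) P \<phi>})"
    using mso unfolding MSO_orderable_def by blast
  define K where "K = max k 2"
  have "card (fst G) \<le> Bd K n m" if G: "G \<in> C" for G
  proof (rule ccontr)
    assume bg: "\<not> card (fst G) \<le> Bd K n m"
    obtain t where t: "is_dec_of G k t" "dheight t \<le> n" using dec_of_wd wd G by blast
    note dr = dec_root[OF t(1)]
    have vt: "valid_dec k t" using dr by blast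
    have V: "fst G = pV (rootg t)" and E: "snd G = pE (rootg t)" using dr by auto
    have ne: "fst G \<noteq> {}" using valid_basic[OF vt] V by simp
    obtain P where P: "\<forall>i<m. P i \<subseteq> fst G" and lin: "linear_order_on (fst G)
             {(a, b). a \<in> fst G \<and> b \<in> fst G \<and> sat G (\<lambda>i. if i = 0 then a else b) P \<phi>}"
      using ord G ne by blast
    define Lab where "Lab x = map (\<lambda>l. if x \<in> P l then 1 else (0::nat)) [0..<m]" for x
    have Labl: "Lab x ! l = (if x \<in> P l then 1 else 0)" if "l < m" for x l
      using that by (simp add: Lab_def)
    have labin: "\<forall>x\<in>pV (rootg t). Lab x \<in> labset K m"
      by (auto simp: Lab_def labset_def K_def)
    have kK: "k \<le> K" by (simp add: K_def)
    have bg': "Bd K n m < card (pV (rootg t))" using bg V by simp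
    have "good Lab t" using big[of k n K] vt t(2) kK labin bg' by blast
    then obtain \<sigma> where s1: "\<forall>x. \<sigma> (\<sigma> x) = x" and s2: "\<forall>x. x \<notin> pV (rootg t) \<longrightarrow> \<sigma> x = x"
      and s3: "\<exists>a\<in>pV (rootg t). \<sigma> a \<noteq> a"
      and s4: "\<forall>x\<in>pV (rootg t). \<sigma> x \<in> pV (rootg t) \<and> pl (rootg t) (\<sigma> x) = pl (rootg t) x \<and> Lab (\<sigma> x) = Lab x"
      and s5: "\<forall>x\<in>pV (rootg t). \<forall>y\<in>pV (rootg t). {x,y} \<in> pE (rootg t) \<longleftrightarrow> {\<sigma> x, \<sigma> y} \<in> pE (rootg t)"
      using good_aut[OF _ vt] by blast
    have inj: "inj \<sigma>"
    proof (rule injI)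
      fix x y assume "\<sigma> x = \<sigma> y"
      then have "\<sigma> (\<sigma> x) = \<sigma> (\<sigma> y)" by simp
      then show "x = y" using s1 by simp
    qed
    have surj: "surj \<sigma>" by (rule surjI[of \<sigma> \<sigma>]) (simp add: s1)
    have bij: "bij \<sigma>" using inj surj by (simp add: bij_def)
    have img: "\<sigma> ` fst G = fst G"
    proof
      show "\<sigma> ` fst G \<subseteq> fst G" using s4 V by auto
      show "fst G \<subseteq> \<sigma> ` fst G"
      proof
        fix x assume x: "x \<in> fst G"
        then have "\<sigma> x \<in> fst G" using s4 V by auto
        moreover have "x = \<sigma> (\<sigma> x)" using s1 by simp
        ultimately show "x \<in> \<sigma> ` fst G" by blast
      qed
    qed
    have outE: "{a,b} \<notin> pE (rootg t)" if "a \<notin> pV (rootg t)" for a b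
      by (rule valid_edge_outside[OF vt that])
    have edges: "\<forall>x y. {x,y} \<in> snd G \<longleftrightarrow> {\<sigma> x, \<sigma> y} \<in> snd G"
    proof (intro allI)
      fix x y
      show "{x,y} \<in> snd G \<longleftrightarrow> {\<sigma> x, \<sigma> y} \<in> snd G"
      proof (cases "x \<in> pV (rootg t) \<and> y \<in> pV (rootg t)")
        case True then show ?thesis using s5 E by simp
      next
        case False
        then consider "x \<notin> pV (rootg t)" | "y \<notin> pV (rootg t)" by blast
        then show ?thesis
        proof cases
          case 1
          then have "\<sigma> x = x" using s2 by simp
          then show ?thesis using outE[OF 1] E by simp
        next
          case 2
          then have "\<sigma> y = y" using s2 by simp
          moreover have "{x,y} = {y,x}" "{\<sigma> x, y} = {y, \<sigma> x}" by (rule insert_commute)+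
          ultimately show ?thesis using outE[OF 2] E by simp
        qed
      qed
    qed
    have memP: "\<sigma> x \<in> P l \<longleftrightarrow> x \<in> P l" if "x \<in> fst G" "l < m" for x l
    proof -
      have "Lab (\<sigma> x) ! l = Lab x ! l" using s4 V that by simp
      then show ?thesis using Labl[OF that(2)] by (simp split: if_splits)
    qed
    have Pfix: "\<sigma> ` P l = P l" if l: "l < m" for l
    proof
      show "\<sigma> ` P l \<subseteq> P l" using memP P l by blast
      show "P l \<subseteq> \<sigma> ` P l"
      proof
        fix x assume x: "x \<in> P l"
        then have xG: "x \<in> fst G" using P l by blast
        have "\<sigma> x \<in> P l" using memP[OF xG l] x by simp
        moreover have "x = \<sigma> (\<sigma> x)" using s1 by simp
        ultimately show "x \<in> \<sigma> ` P l" by blast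
      qed
    qed
    obtain a where a: "a \<in> fst G" "\<sigma> a \<noteq> a" using s3 V by blast
    define b where "b = \<sigma> a"
    have bG: "b \<in> fst G" using img a(1) unfolding b_def by blast
    have sb: "\<sigma> b = a" using s1 unfolding b_def by simp
    have swap: "sat G (\<lambda>i. if i = 0 then x else y) P \<phi> \<longleftrightarrow> sat G (\<lambda>i. if i = 0 then \<sigma> x else \<sigma> y) P \<phi>" for x y
    proof -
      have "sat G (\<lambda>i. if i = 0 then x else y) P \<phi> = sat G (\<sigma> \<circ> (\<lambda>i. if i = 0 then x else y)) (\<lambda>X. \<sigma> ` P X) \<phi>"
        by (rule sat_aut[OF bij img edges])
      also have "\<dots> = sat G (\<sigma> \<circ> (\<lambda>i. if i = 0 then x else y)) P \<phi>"
        by (rule sat_fv2) (use fv Pfix in auto)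
      also have "\<sigma> \<circ> (\<lambda>i. if i = 0 then x else y) = (\<lambda>i. if i = 0 then \<sigma> x else \<sigma> y)" by (rule ext) simp
      finally show ?thesis .
    qed
    have tot: "total_on (fst G) {(a, b). a \<in> fst G \<and> b \<in> fst G \<and> sat G (\<lambda>i. if i = 0 then a else b) P \<phi>}"
      and anti: "antisym {(a, b). a \<in> fst G \<and> b \<in> fst G \<and> sat G (\<lambda>i. if i = 0 then a else b) P \<phi>}"
      using lin unfolding linear_order_on_def partial_order_on_def by auto
    have ab: "a \<noteq> b" using a(2) unfolding b_def by simp
    have "sat G (\<lambda>i. if i = 0 then a else b) P \<phi> \<or> sat G (\<lambda>i. if i = 0 then b else a) P \<phi>"
      using tot a(1) bG ab unfolding total_on_def by blast
    moreover have "sat G (\<lambda>i. if i = 0 then a else b) P \<phi> \<longleftrightarrow> sat G (\<lambda>i. if i = 0 then b else a) P \<phi>"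
    proof -
      have sa: "\<sigma> a = b" by (simp add: b_def)
      show ?thesis using swap[of a b, unfolded sa sb] .
    qed
    ultimately have both: "sat G (\<lambda>i. if i = 0 then a else b) P \<phi>" "sat G (\<lambda>i. if i = 0 then b else a) P \<phi>" by blast+
    have "a = b" using anti a(1) bG both unfolding antisym_def by blast
    then show False using ab by simp
  qed
  then show ?thesis by blast
qed

lemma cut_D3:
  assumes fg: "\<forall>G\<in>C. finite_graph G" and wd: "\<forall>G\<in>C. wd_tensor n G \<le> enat k" and cut: "has_CUT C"
  shows "\<exists>d. \<forall>G\<in>C. \<exists>t. is_dec_of G k t \<and> dheight t \<le> n \<and> outdeg_le d t"
proof -
  obtain f where f: "\<forall>G\<in>C. \<forall>K. Cut G K \<le> f K" using cut unfolding has_CUT_def by blast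
  define d where "d = f (Kf k n)"
  have "\<exists>t. is_dec_of G k t \<and> dheight t \<le> n \<and> outdeg_le d t" if G: "G \<in> C" for G
  proof -
    obtain t where t: "is_dec_of G k t" "dheight t \<le> n" using dec_of_wd wd G by blast
    note dr = dec_root[OF t(1)]
    have vt: "valid_dec k t" using dr by blast
    have GV: "G = (pV (rootg t), pE (rootg t))" using dr by (metis prod.collapse)
    have fgt: "finite_graph (pV (rootg t), pE (rootg t))"
      using valid_basic[OF vt] by (simp add: ports_in_def Del_def)
    have finG: "finite (fst G)" using fg G by (simp add: finite_graph_def)
    have "\<forall>v\<in>subtrees t. length (dchildren v) \<le> d"
    proof
      fix v assume vs: "v \<in> subtrees t"
      obtain Hv Rv cs where vv: "v = DNode (Hv,Rv) cs" by (metis dtree.exhaust surj_pair)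
      show "length (dchildren v) \<le> d"
      proof (cases "cs = []")
        case True then show ?thesis using vv by simp
      next
        case ne: False
        obtain p R' where symR: "sym R'" and pk: "\<forall>x\<in>pV (rootg t). p x < Kf k n"
          and cond: "\<forall>x\<in>pV (rootg t). \<forall>y\<in>pV (rootg t). \<not>(\<exists>i<length cs. x \<in> pV (rootg (cs!i)) \<and> y \<in> pV (rootg (cs!i)))
          \<longrightarrow> \<not>(x \<notin> pV Hv \<and> y \<notin> pV Hv) \<longrightarrow> ({x,y} \<in> pE (rootg t) \<longleftrightarrow> (p x, p y) \<in> R')"
          using port[OF vt, rule_format, OF t(2) vs vv ne] by blast
        have vsub: "valid_dec k v \<and> pV (rootg v) \<subseteq> pV (rootg t)" using valid_subtrees[OF vt vs] .
        have vv': "valid_dec k (DNode (Hv,Rv) cs)" using vsub vv by simp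
        have HvT: "pV Hv \<subseteq> pV (rootg t)" using vsub vv by simp
        have child: "pV (rootg (cs!i)) \<subseteq> pV Hv \<and> pV (rootg (cs!i)) \<noteq> {}" if "i < length cs" for i
          using valid_child[OF vv' that] by blast
        have HvU: "pV Hv = (\<Union>c\<in>set cs. pV (rootg c))" using valid_children_V[OF vv' ne] .
        define Ot where "Ot = pV (rootg t) - pV Hv"
        define Bs where "Bs = map (\<lambda>c. pV (rootg c)) cs @ (if Ot = {} then [] else [Ot])"
        have lenBs: "length cs \<le> length Bs" by (simp add: Bs_def)
        have Bi: "(i < length cs \<and> Bs!i = pV (rootg (cs!i))) \<or> (i = length cs \<and> Bs!i = Ot \<and> Ot \<noteq> {})"
          if "i < length Bs" for i
          using that by (auto simp: Bs_def nth_append split: if_splits)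
        have ne': "\<forall>i<length Bs. Bs!i \<noteq> {}" using Bi child by blast
        have dj: "\<forall>i<length Bs. \<forall>j<length Bs. i \<noteq> j \<longrightarrow> Bs!i \<inter> Bs!j = {}"
        proof (intro allI impI)
          fix i j assume i: "i < length Bs" and j: "j < length Bs" and ij: "i \<noteq> j"
          show "Bs!i \<inter> Bs!j = {}"
          proof (cases "i < length cs")
            case iT: True
            then have bi: "Bs!i = pV (rootg (cs!i))" using Bi[OF i] by auto
            show ?thesis
            proof (cases "j < length cs")
              case True
              then have "Bs!j = pV (rootg (cs!j))" using Bi[OF j] by auto
              then show ?thesis using bi valid_disj[OF vv' iT True ij] by simp
            next
              case False
              then have "Bs!j = Ot" using Bi[OF j] by auto
              then show ?thesis using bi child[OF iT] unfolding Ot_def by blast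
            qed
          next
            case iF: False
            then have bi: "Bs!i = Ot" "i = length cs" using Bi[OF i] by auto
            then have jT: "j < length cs" using Bi[OF j] ij by auto
            then have "Bs!j = pV (rootg (cs!j))" using Bi[OF j] by auto
            then show ?thesis using bi child[OF jT] unfolding Ot_def by blast
          qed
        qed
        have setBs: "set Bs = (\<lambda>c. pV (rootg c)) ` set cs \<union> (if Ot = {} then {} else {Ot})"
          by (simp add: Bs_def)
        have un: "(\<Union>i<length Bs. Bs!i) = pV (rootg t)"
        proof -
          have "(\<Union>i<length Bs. Bs!i) = (\<Union>B\<in>set Bs. B)" using UN_set_nth[of "\<lambda>B. B" Bs] by simp
          also have "\<dots> = pV Hv \<union> Ot" using setBs HvU by auto
          also have "\<dots> = pV (rootg t)" using HvT unfolding Ot_def by blast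
          finally show ?thesis .
        qed
        have cr: "\<forall>i<length Bs. \<forall>j<length Bs. i \<noteq> j \<longrightarrow> (\<forall>x\<in>Bs!i. \<forall>y\<in>Bs!j. {x,y} \<in> pE (rootg t) \<longleftrightarrow> (p x, p y) \<in> R')"
        proof (intro allI impI ballI)
          fix i j x y assume i: "i < length Bs" and j: "j < length Bs" and ij: "i \<noteq> j"
            and x: "x \<in> Bs!i" and y: "y \<in> Bs!j"
          have xT: "x \<in> pV (rootg t)" and yT: "y \<in> pV (rootg t)" using un i j x y by blast+
          have ns: "\<not>(\<exists>l<length cs. x \<in> pV (rootg (cs!l)) \<and> y \<in> pV (rootg (cs!l)))"
          proof
            assume "\<exists>l<length cs. x \<in> pV (rootg (cs!l)) \<and> y \<in> pV (rootg (cs!l))"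
            then obtain l where l: "l < length cs" "x \<in> pV (rootg (cs!l))" "y \<in> pV (rootg (cs!l))" by blast
            have xl: "x \<in> pV Hv" "y \<in> pV Hv" using child[OF l(1)] l by blast+
            have gen: "i' < length cs \<and> i' = l" if i': "i' < length Bs" "z \<in> Bs!i'" "z \<in> pV (rootg (cs!l))" for i' z
            proof (cases "i' < length cs")
              case True
              then have bi: "Bs!i' = pV (rootg (cs!i'))" using Bi[OF i'(1)] by auto
              have "i' = l"
              proof (rule ccontr)
                assume "i' \<noteq> l"
                then have "pV (rootg (cs!i')) \<inter> pV (rootg (cs!l)) = {}" by (rule valid_disj[OF vv' True l(1)])
                then show False using bi i'(2,3) by blast
              qed
              then show ?thesis using True by simp
            next
              case False
              then have "Bs!i' = Ot" using Bi[OF i'(1)] by auto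
              then have "z \<notin> pV Hv" using i'(2) unfolding Ot_def by blast
              then show ?thesis using child[OF l(1)] i'(3) by blast
            qed
            have "i < length cs \<and> i = l" using gen[OF i x l(2)] .
            moreover have "j < length cs \<and> j = l" using gen[OF j y l(3)] .
            ultimately show False using ij by simp
          qed
          have no: "\<not>(x \<notin> pV Hv \<and> y \<notin> pV Hv)"
          proof (cases "i < length cs")
            case True
            then have "x \<in> pV Hv" using Bi[OF i] child[OF True] x by auto
            then show ?thesis by blast
          next
            case False
            then have "i = length cs" using Bi[OF i] by auto
            then have jT: "j < length cs" using Bi[OF j] ij by auto
            then have "y \<in> pV Hv" using Bi[OF j] child[OF jT] y by auto
            then show ?thesis by blast
          qed
          show "{x,y} \<in> pE (rootg t) \<longleftrightarrow> (p x, p y) \<in> R'" using cond xT yT ns no by blast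
        qed
        have "cut_rep (pV (rootg t), pE (rootg t)) (Kf k n) (length Bs)"
          by (rule partition_cut[OF fgt ne' dj un pk cr])
        then have "length Bs \<le> Cut G (Kf k n)" using Cut_ge[OF finG] GV by simp
        also have "\<dots> \<le> d" using f G unfolding d_def by blast
        finally show ?thesis using lenBs vv by simp
      qed
    qed
    then show ?thesis using t outdeg_from_subtrees by blast
  qed
  then show ?thesis by blast
qed

lemma bounded_CUT:
  assumes fg: "\<forall>G\<in>C. finite_graph G" and N: "\<forall>G\<in>C. card (fst G) \<le> N"
  shows "has_CUT C"
  unfolding has_CUT_def
proof (intro exI[of _ "\<lambda>K. max N (Greatest (\<lambda>_::nat. False))"] ballI allI)
  fix G K assume G: "G \<in> C"
  have finG: "finite (fst G)" using fg G by (simp add: finite_graph_def)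
  show "Cut G K \<le> max N (Greatest (\<lambda>_::nat. False))"
  proof (cases "\<exists>m. cut_rep G K m")
    case True
    then obtain m where m: "cut_rep G K m" by blast
    have "cut_rep G K (Cut G K)" unfolding Cut_def
      by (rule GreatestI_nat[where k = m and b = "card (fst G)"]) (use m cut_le_card[OF finG] in auto)
    then have "Cut G K \<le> card (fst G)" by (rule cut_le_card[OF finG])
    then show ?thesis using N G by fastforce
  next
    case False
    then have "cut_rep G K = (\<lambda>_. False)" by auto
    then show ?thesis unfolding Cut_def by simp
  qed
qed

lemma bounded_D3:
  assumes fg: "\<forall>G\<in>C. finite_graph G" and wd: "\<forall>G\<in>C. wd_tensor n G \<le> enat k" and N: "\<forall>G\<in>C. card (fst G) \<le> N"
  shows "\<exists>d. \<forall>G\<in>C. \<exists>t. is_dec_of G k t \<and> dheight t \<le> n \<and> outdeg_le d t"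
proof -
  have "\<exists>t. is_dec_of G k t \<and> dheight t \<le> n \<and> outdeg_le N t" if G: "G \<in> C" for G
  proof -
    obtain t where t: "is_dec_of G k t" "dheight t \<le> n" using dec_of_wd wd G by blast
    note dr = dec_root[OF t(1)]
    have vt: "valid_dec k t" using dr by blast
    have fin: "finite (pV (rootg t))" using valid_basic[OF vt] by simp
    have "\<forall>v\<in>subtrees t. length (dchildren v) \<le> N"
    proof
      fix v assume vs: "v \<in> subtrees t"
      obtain Hv Rv cs where vv: "v = DNode (Hv,Rv) cs" by (metis dtree.exhaust surj_pair)
      have vsub: "valid_dec k v \<and> pV (rootg v) \<subseteq> pV (rootg t)" using valid_subtrees[OF vt vs] .
      have "length cs \<le> card (pV Hv)" using valid_len_le_card[of k Hv Rv cs] vsub vv by simp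
      also have "\<dots> \<le> card (pV (rootg t))" using card_mono[OF fin] vsub vv by simp
      also have "\<dots> \<le> N"
      proof -
        have cG: "card (fst G) \<le> N" using N G by blast
        then show ?thesis using dr by simp
      qed
      finally show "length (dchildren v) \<le> N" using vv by simp
    qed
    then show ?thesis using t outdeg_from_subtrees by blast
  qed
  then show ?thesis by blast
qed

lemma D3_bounded:
  assumes D: "\<exists>d. \<forall>G\<in>C. \<exists>t. is_dec_of G k t \<and> dheight t \<le> n \<and> outdeg_le d t"
  shows "\<exists>N. \<forall>G\<in>C. card (fst G) \<le> N"
proof -
  obtain d where d: "\<forall>G\<in>C. \<exists>t. is_dec_of G k t \<and> dheight t \<le> n \<and> outdeg_le d t" using D by blast
  have "card (fst G) \<le> (max d 1) ^ n" if G: "G \<in> C" for G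
  proof -
    obtain t where t: "is_dec_of G k t" "dheight t \<le> n" "outdeg_le d t" using d G by blast
    note dr = dec_root[OF t(1)]
    have "card (fst G) = card (pV (rootg t))" using dr by simp
    also have "\<dots> \<le> (max d 1) ^ dheight t" using size_bound dr t(3) by blast
    also have "\<dots> \<le> (max d 1) ^ n" by (rule power_increasing[OF t(2)]) simp
    finally show ?thesis .
  qed
  then show ?thesis by blast
qed

theorem theorem5p22:
  fixes n k :: nat and C :: "graph set"
  assumes "\<forall>G\<in>C. finite_graph G"
    and "\<forall>G\<in>C. wd_tensor n G \<le> enat k"
  shows "(MSO_orderable C \<longleftrightarrow> has_CUT C)
       \<and> (has_CUT C \<longleftrightarrow>
            (\<exists>d. \<forall>G\<in>C. \<exists>t. is_dec_of G k t \<and> dheight t \<le> n \<and> outdeg_le d t))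
       \<and> ((\<exists>d. \<forall>G\<in>C. \<exists>t. is_dec_of G k t \<and> dheight t \<le> n \<and> outdeg_le d t)
            \<longleftrightarrow> finite_up_to_iso C)"
proof -
  let ?B = "\<exists>N. \<forall>G\<in>C. card (fst G) \<le> N"
  let ?D = "\<exists>d. \<forall>G\<in>C. \<exists>t. is_dec_of G k t \<and> dheight t \<le> n \<and> outdeg_le d t"
  have F: "finite_up_to_iso C \<longleftrightarrow> ?B"
  proof
    assume "finite_up_to_iso C" then show ?B using finite_iso_bounded assms(1) by blast
  next
    assume ?B
    then obtain N where "\<forall>G\<in>C. card (fst G) \<le> N" by blast
    then show "finite_up_to_iso C" using bounded_finite_iso assms(1) by blast
  qed
  have M: "MSO_orderable C \<longleftrightarrow> ?B"
  proof
    assume "MSO_orderable C" then show ?B using mso_bounded assms by blast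
  next
    assume ?B
    then obtain N where "\<forall>G\<in>C. card (fst G) \<le> N" by blast
    then show "MSO_orderable C" using bounded_MSO assms(1) by blast
  qed
  have Dq: "?D \<longleftrightarrow> ?B"
  proof
    assume ?D then show ?B by (rule D3_bounded)
  next
    assume ?B
    then obtain N where "\<forall>G\<in>C. card (fst G) \<le> N" by blast
    then show ?D using bounded_D3 assms by blast
  qed
  have Cq: "has_CUT C \<longleftrightarrow> ?B"
  proof
    assume "has_CUT C" then have ?D using cut_D3 assms by blast
    then show ?B using Dq by blast
  next
    assume ?B
    then obtain N where "\<forall>G\<in>C. card (fst G) \<le> N" by blast
    then show "has_CUT C" using bounded_CUT assms(1) by blast
  qed
  show ?thesis using F M Dq Cq by blast
qed


end
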